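(* Let $n \ge 1$ and $w \in S_n$. The Schubert polynomial $\mathfrak{S}_w$ is a single complete homogeneous monomial, i.e. $\mathfrak{S}_w = h_{\vec a}$ for some sequence $\vec a$, if and only if $w$ avoids the patterns $321$ and $231$.
   Context: For $i \ge 1$ and $j \ge 0$, $h^i_j$ denotes the complete homogeneous symmetric polynomial of degree $j$ in the variables $x_1,\dots,x_i$ (so $h^i_0 = 1$). A complete homogeneous monomial (CHM) is a product $h_{\vec a} = h^1_{a_1} h^2_{a_2}\cdots$ where $\vec a = (a_1,a_2,\dots)$ is a sequence of nonnegative integers, only finitely many nonzero. Schubert polynomials $\mathfrak{S}_w$, $w \in S_n$, are defined by $\mathfrak{S}_{w_0} = x_1^{n-1}x_2^{n-2}\cdots x_{n-1}$ for the longest element $w_0$, and $\partial_i \mathfrak{S}_w = \mathfrak{S}_{ws_i}$ if $\ell(ws_i) = \ell(w)-1$, $\partial_i\mathfrak{S}_w = 0$ otherwise, where $\partial_i f = (f - s_i f)/(x_i - x_{i+1})$ and $s_i$ swaps $x_i, x_{i+1}$. A permutation $w$ contains a pattern $p \in S_k$ if there are indices $i_1 < \dots < i_k$ such that $w(i_1),\dots,w(i_k)$ are in the same relative order as $p(1),\dots,p(k)$; otherwise $w$ avoids $p$. *)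

theory Defs
  imports "HOL-Library.Poly_Mapping" "HOL-Combinatorics.Permutations" "HOL-Combinatorics.Transposition"
begin

text \<open>Polynomials in the variables x_1, x_2, ... with integer coefficients:
  a monomial is a finitely supported exponent vector, where
  the key i stands for the variable x_i (we use i \<ge> 1, index 0 is unused).\<close>

type_synonym mpoly = "(nat \<Rightarrow>\<^sub>0 nat) \<Rightarrow>\<^sub>0 int"

definition var :: "nat \<Rightarrow> mpoly" where
  "var i = Poly_Mapping.single (Poly_Mapping.single i 1) 1"

definition swap_mon :: "nat \<Rightarrow> (nat \<Rightarrow>\<^sub>0 nat) \<Rightarrow> (nat \<Rightarrow>\<^sub>0 nat)" where
  "swap_mon i m = Abs_poly_mapping (\<lambda>k. Poly_Mapping.lookup m (transpose i (Suc i) k))"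

definition swap_poly :: "nat \<Rightarrow> mpoly \<Rightarrow> mpoly" where
  "swap_poly i f = Abs_poly_mapping (\<lambda>m. Poly_Mapping.lookup f (swap_mon i m))"

definition divdiff :: "nat \<Rightarrow> mpoly \<Rightarrow> mpoly" where
  "divdiff i f = (THE g. f - swap_poly i f = (var i - var (Suc i)) * g)"

definition stransp :: "nat \<Rightarrow> nat \<Rightarrow> nat" where
  "stransp i = transpose i (Suc i)"

definition perm_length :: "nat \<Rightarrow> (nat \<Rightarrow> nat) \<Rightarrow> nat" where
  "perm_length n w = card {(i, j). i \<in> {1..n} \<and> j \<in> {1..n} \<and> i < j \<and> w i > w j}"

definition longest :: "nat \<Rightarrow> nat \<Rightarrow> nat" where
  "longest n = (\<lambda>i. if i \<in> {1..n} then n + 1 - i else i)"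

definition staircase :: "nat \<Rightarrow> mpoly" where
  "staircase n = (\<Prod>i\<in>{1..n}. var i ^ (n - i))"

text \<open>The Schubert polynomials of S_n, as specified in the paper:
  S_{w0} = x^delta and \<partial>_i S_w = S_{w s_i} whenever l(w s_i) = l(w) - 1.
  The relation below contains exactly the pairs (w, p) reachable from w0 this way;
  Schubert w is the (unique) such p.\<close>
inductive is_schubert :: "nat \<Rightarrow> (nat \<Rightarrow> nat) \<Rightarrow> mpoly \<Rightarrow> bool" for n where
  top: "is_schubert n (longest n) (staircase n)"
| step: "\<lbrakk> is_schubert n w p; 1 \<le> i; i < n;
           perm_length n (w \<circ> stransp i) + 1 = perm_length n w \<rbrakk>
         \<Longrightarrow> is_schubert n (w \<circ> stransp i) (divdiff i p)"

definition schubert :: "nat \<Rightarrow> (nat \<Rightarrow> nat) \<Rightarrow> mpoly" where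
  "schubert n w = (THE p. is_schubert n w p)"

definition hcomp :: "nat \<Rightarrow> nat \<Rightarrow> mpoly" where
  "hcomp i j = (\<Sum>m\<in>{m :: nat \<Rightarrow>\<^sub>0 nat. Poly_Mapping.keys m \<subseteq> {1..i} \<and> (\<Sum>k\<in>Poly_Mapping.keys m. Poly_Mapping.lookup m k) = j}.
                  Poly_Mapping.single m 1)"

text \<open>Complete homogeneous monomial h_a = h^1_{a_1} h^2_{a_2} ...; a finitely
  supported sequence (a_1, a_2, ...) is given as the list [a_1, ..., a_L].\<close>
definition chm :: "nat list \<Rightarrow> mpoly" where
  "chm a = (\<Prod>k<length a. hcomp (Suc k) (a ! k))"

definition contains_pattern :: "nat \<Rightarrow> (nat \<Rightarrow> nat) \<Rightarrow> nat list \<Rightarrow> bool" where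
  "contains_pattern n w p = (\<exists>idx :: nat \<Rightarrow> nat.
      (\<forall>a b. a < b \<and> b < length p \<longrightarrow> idx a < idx b) \<and>
      (\<forall>a < length p. idx a \<in> {1..n}) \<and>
      (\<forall>a < length p. \<forall>b < length p. (w (idx a) < w (idx b) \<longleftrightarrow> p ! a < p ! b)))"

end

theory Submission
  imports Defs
begin


abbreviation lk :: "('a \<Rightarrow>\<^sub>0 'b::zero) \<Rightarrow> 'a \<Rightarrow> 'b" where "lk \<equiv> Poly_Mapping.lookup"
abbreviation ks :: "('a \<Rightarrow>\<^sub>0 'b::zero) \<Rightarrow> 'a set" where "ks \<equiv> Poly_Mapping.keys"
abbreviation mon :: "(nat \<Rightarrow>\<^sub>0 nat) \<Rightarrow> mpoly" where "mon b \<equiv> Poly_Mapping.single b 1"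

abbreviation tr :: "nat \<Rightarrow> nat \<Rightarrow> nat" where "tr i \<equiv> transpose i (Suc i)"

lemma tr_tr[simp]: "tr i (tr i k) = k"
  by (simp add: transpose_involutory)

lemma inj_tr: "inj (tr i)" by (rule inj_transpose)

lemma lookup_swap_mon[simp]: "lk (swap_mon i m) k = lk m (tr i k)"
proof -
  have fin: "finite (tr i -` {k. lk m k \<noteq> 0})"
    by (rule finite_vimageI[OF _ inj_tr]) simp
  have "{k. lk m (tr i k) \<noteq> 0} = tr i -` {k. lk m k \<noteq> 0}" by auto
  with fin have "finite {k. lk m (tr i k) \<noteq> 0}" by (simp only:)
  thus ?thesis unfolding swap_mon_def by (subst lookup_Abs_poly_mapping) auto
qed

lemma swap_mon_swap_mon[simp]: "swap_mon i (swap_mon i m) = m"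
  by (rule poly_mapping_eqI) simp

lemma inj_swap_mon: "inj (swap_mon i)"
  by (metis injI swap_mon_swap_mon)

lemma swap_mon_add: "swap_mon i (a + b) = swap_mon i a + swap_mon i b"
  by (rule poly_mapping_eqI) (simp add: lookup_add)

lemma swap_mon_zero[simp]: "swap_mon i 0 = 0"
  by (rule poly_mapping_eqI) simp

lemma swap_mon_single: "swap_mon i (Poly_Mapping.single k c) = Poly_Mapping.single (tr i k) c"
  by (rule poly_mapping_eqI) (simp add: lookup_single when_def, metis tr_tr)

lemma lookup_swap_poly[simp]: "lk (swap_poly i f) m = lk f (swap_mon i m)"
proof -
  have fin: "finite (swap_mon i -` {k. lk f k \<noteq> 0})"
    by (rule finite_vimageI[OF _ inj_swap_mon]) simp
  have "{m. lk f (swap_mon i m) \<noteq> 0} = swap_mon i -` {m. lk f m \<noteq> 0}" by auto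
  with fin have "finite {m. lk f (swap_mon i m) \<noteq> 0}" by (simp only:)
  thus ?thesis unfolding swap_poly_def by (subst lookup_Abs_poly_mapping) auto
qed

lemma swap_poly_swap_poly[simp]: "swap_poly i (swap_poly i f) = f"
  by (rule poly_mapping_eqI) simp

lemma swap_poly_add: "swap_poly i (f + g) = swap_poly i f + swap_poly i g"
  by (rule poly_mapping_eqI) (simp add: lookup_add)

lemma swap_poly_diff: "swap_poly i (f - g) = swap_poly i f - swap_poly i g"
  by (rule poly_mapping_eqI) (simp add: lookup_minus)

lemma swap_poly_uminus: "swap_poly i (- f) = - swap_poly i f"
  by (rule poly_mapping_eqI) simp

lemma swap_poly_zero[simp]: "swap_poly i 0 = 0"
  by (rule poly_mapping_eqI) simp

lemma swap_poly_single: "swap_poly i (Poly_Mapping.single m c) = Poly_Mapping.single (swap_mon i m) c"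
  by (rule poly_mapping_eqI) (simp add: lookup_single when_def, metis swap_mon_swap_mon)

lemma swap_poly_one[simp]: "swap_poly i 1 = 1"
  by (metis one_poly_mapping.abs_eq single_one swap_mon_zero swap_poly_single) 

lemma swap_poly_mult: "swap_poly i (f * g) = swap_poly i f * swap_poly i g"
proof -
  have one: "swap_poly i (frag_of a * g) = swap_poly i (frag_of a) * swap_poly i g" for a
  using subset_UNIV proof (induction g rule: frag_induction)
    case (one x)
    then show ?case by (simp add: mult_single swap_poly_single swap_mon_add)
  next
    case (diff a b)
    then show ?case by (simp add: algebra_simps swap_poly_diff)
  qed auto
  show ?thesis
  using subset_UNIV proof (induction f rule: frag_induction)
    case (diff a b)
    then show ?case by (simp add: algebra_simps swap_poly_diff)
  qed (auto simp: one)
qed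

lemma swap_poly_power: "swap_poly i (f ^ n) = swap_poly i f ^ n"
  by (induction n) (simp_all add: swap_poly_mult)

lemma swap_poly_prod: "swap_poly i (prod F S) = prod (\<lambda>x. swap_poly i (F x)) S"
  by (induction S rule: infinite_finite_induct) (simp_all add: swap_poly_mult)

lemma swap_poly_sum: "swap_poly i (sum F S) = sum (\<lambda>x. swap_poly i (F x)) S"
  by (induction S rule: infinite_finite_induct) (simp_all add: swap_poly_add)

lemma swap_poly_var: "swap_poly i (var k) = var (tr i k)"
  by (simp add: var_def swap_poly_single swap_mon_single)

lemma swap_poly_var_simps[simp]:
  "swap_poly i (var i) = var (Suc i)"
  "swap_poly i (var (Suc i)) = var i"
  "k \<noteq> i \<Longrightarrow> k \<noteq> Suc i \<Longrightarrow> swap_poly i (var k) = var k"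
  by (simp_all add: swap_poly_var)


lemma tr_commute: "j \<noteq> i \<Longrightarrow> j \<noteq> Suc i \<Longrightarrow> i \<noteq> Suc j \<Longrightarrow> tr i (tr j k) = tr j (tr i k)"
  by (auto simp: transpose_def)

lemma tr_braid: "tr i (tr (Suc i) (tr i k)) = tr (Suc i) (tr i (tr (Suc i) k))"
  by (auto simp: transpose_def)

lemma swap_poly_commute:
  assumes "j \<noteq> i" "j \<noteq> Suc i" "i \<noteq> Suc j"
  shows "swap_poly i (swap_poly j f) = swap_poly j (swap_poly i f)"
proof (rule poly_mapping_eqI)
  fix m
  have "swap_mon j (swap_mon i m) = swap_mon i (swap_mon j m)"
    by (rule poly_mapping_eqI) (simp add: tr_commute[OF assms])
  thus "lk (swap_poly i (swap_poly j f)) m = lk (swap_poly j (swap_poly i f)) m" by simp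
qed

lemma swap_poly_braid:
  "swap_poly i (swap_poly (Suc i) (swap_poly i f)) = swap_poly (Suc i) (swap_poly i (swap_poly (Suc i) f))"
proof (rule poly_mapping_eqI)
  fix m
  have "swap_mon i (swap_mon (Suc i) (swap_mon i m)) = swap_mon (Suc i) (swap_mon i (swap_mon (Suc i) m))"
    by (rule poly_mapping_eqI) (simp add: tr_braid)
  thus "lk (swap_poly i (swap_poly (Suc i) (swap_poly i f))) m = lk (swap_poly (Suc i) (swap_poly i (swap_poly (Suc i) f))) m"
    by simp
qed

definition upd2 :: "(nat \<Rightarrow>\<^sub>0 nat) \<Rightarrow> nat \<Rightarrow> nat \<Rightarrow> nat \<Rightarrow> (nat \<Rightarrow>\<^sub>0 nat)" where
  "upd2 b k x y = Poly_Mapping.update (Suc k) y (Poly_Mapping.update k x b)"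

lemma lookup_upd2: "lk (upd2 b k x y) i = (if i = k then x else if i = Suc k then y else lk b i)"
  by (simp add: upd2_def update.rep_eq)

lemma upd2_self: "upd2 b k (lk b k) (lk b (Suc k)) = b"
  by (rule poly_mapping_eqI) (simp add: lookup_upd2)

lemma upd2_swap: "upd2 b k (lk b (Suc k)) (lk b k) = swap_mon k b"
  by (rule poly_mapping_eqI) (auto simp add: lookup_upd2 transpose_def)

lemma var_mult_mon: "var k * mon c = mon (c + Poly_Mapping.single k 1)"
  by (simp add: var_def mult_single add.commute)

lemma var_mult_upd2_1: "var k * mon (upd2 b k x y) = mon (upd2 b k (Suc x) y)"
  unfolding var_mult_mon
  by (rule arg_cong[where f=mon], rule poly_mapping_eqI) (simp add: lookup_upd2 lookup_add lookup_single)

lemma var_mult_upd2_2: "var (Suc k) * mon (upd2 b k x y) = mon (upd2 b k x (Suc y))"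
  unfolding var_mult_mon
  by (rule arg_cong[where f=mon], rule poly_mapping_eqI) (simp add: lookup_upd2 lookup_add lookup_single)

lemma tele:
  assumes "y \<le> x"
  shows "(var k - var (Suc k)) * (\<Sum>t<x-y. mon (upd2 b k (y+t) (x-1-t))) = mon (upd2 b k x y) - mon (upd2 b k y x)"
proof -
  define F where "F t = mon (upd2 b k (y+t) (x-t))" for t
  have "(var k - var (Suc k)) * (\<Sum>t<x-y. mon (upd2 b k (y+t) (x-1-t))) =
        (\<Sum>t<x-y. F (Suc t) - F t)"
    unfolding sum_distrib_left
  proof (rule sum.cong[OF refl])
    fix t assume "t \<in> {..<x-y}"
    hence t: "t < x - y" by simp
    have "(var k - var (Suc k)) * mon (upd2 b k (y+t) (x-1-t)) =
          mon (upd2 b k (Suc (y+t)) (x-1-t)) - mon (upd2 b k (y+t) (Suc (x-1-t)))"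
      by (simp add: algebra_simps var_mult_upd2_1 var_mult_upd2_2)
    also have "\<dots> = F (Suc t) - F t" unfolding F_def using t
      by (simp add: Suc_diff_Suc)
    finally show "(var k - var (Suc k)) * mon (upd2 b k (y+t) (x-1-t)) = F (Suc t) - F t" .
  qed
  also have "\<dots> = F (x - y) - F 0" by (rule sum_lessThan_telescope)
  also have "\<dots> = mon (upd2 b k x y) - mon (upd2 b k y x)"
    unfolding F_def using assms by simp
  finally show ?thesis .
qed

definition dmon :: "nat \<Rightarrow> (nat \<Rightarrow>\<^sub>0 nat) \<Rightarrow> mpoly" where
  "dmon k b = (if lk b (Suc k) \<le> lk b k
     then (\<Sum>t<lk b k - lk b (Suc k). mon (upd2 b k (lk b (Suc k) + t) (lk b k - 1 - t)))
     else - (\<Sum>t<lk b (Suc k) - lk b k. mon (upd2 b k (lk b k + t) (lk b (Suc k) - 1 - t))))"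

lemma dmon_eq: "(var k - var (Suc k)) * dmon k b = mon b - swap_poly k (mon b)"
proof (cases "lk b (Suc k) \<le> lk b k")
  case True
  then show ?thesis unfolding dmon_def
    using tele[OF True, of k b] by (simp add: upd2_self upd2_swap swap_poly_single)
next
  case False
  hence le: "lk b k \<le> lk b (Suc k)" by simp
  from False show ?thesis unfolding dmon_def
    using tele[OF le, of k b] by (simp add: upd2_self upd2_swap swap_poly_single)
qed

definition dd :: "nat \<Rightarrow> mpoly \<Rightarrow> mpoly" where
  "dd k f = frag_extend (dmon k) f"

lemma dd_eq: "(var k - var (Suc k)) * dd k f = f - swap_poly k f"
  unfolding dd_def
  using subset_UNIV
proof (induction f rule: frag_induction)
  case (one x)
  then show ?case by (simp add: dmon_eq)
next
  case (diff a b)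
  have "(var k - var (Suc k)) * frag_extend (dmon k) (a - b) =
     (var k - var (Suc k)) * frag_extend (dmon k) a - (var k - var (Suc k)) * frag_extend (dmon k) b"
    by (simp add: frag_extend_diff right_diff_distrib)
  also have "\<dots> = (a - swap_poly k a) - (b - swap_poly k b)" using diff by simp
  also have "\<dots> = (a - b) - swap_poly k (a - b)" by (simp add: swap_poly_diff)
  finally show ?case .
qed simp

lemma var_diff_nz: "var k - var (Suc k) \<noteq> 0"
proof
  assume "var k - var (Suc k) = 0"
  hence "lk (var k - var (Suc k)) (Poly_Mapping.single k 1) = 0" by simp
  moreover have "Poly_Mapping.single (Suc k) (1::nat) \<noteq> Poly_Mapping.single k 1"
    by (metis lookup_single_eq lookup_single_not_eq n_not_Suc_n zero_neq_one)
  ultimately show False by (simp add: var_def lookup_minus lookup_single)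
qed

lemma divdiff_eq:
  assumes "(var k - var (Suc k)) * g = f - swap_poly k f"
  shows "divdiff k f = g"
  unfolding divdiff_def
proof (rule the_equality)
  show "f - swap_poly k f = (var k - var (Suc k)) * g" using assms by simp
next
  fix g' assume h: "f - swap_poly k f = (var k - var (Suc k)) * g'"
  have "(var k - var (Suc k)) * g' = (var k - var (Suc k)) * g" by (metis h assms)
  thus "g' = g" using var_diff_nz by (metis mult_left_cancel)
qed

lemma divdiff_dd: "divdiff k f = dd k f"
  by (rule divdiff_eq[OF dd_eq])

lemma divdiff_prop: "(var k - var (Suc k)) * divdiff k f = f - swap_poly k f"
  by (simp add: divdiff_dd dd_eq)

definition dstep :: "nat \<Rightarrow> (nat \<Rightarrow>\<^sub>0 nat) \<Rightarrow> (nat \<Rightarrow>\<^sub>0 nat) \<Rightarrow> bool" where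
  "dstep k b c \<longleftrightarrow> (\<exists>x y. c = upd2 b k x y \<and> x + y + 1 = lk b k + lk b (Suc k) \<and>
      x < max (lk b k) (lk b (Suc k)) \<and> y < max (lk b k) (lk b (Suc k)))"

lemma keys_mon_sum: "ks (\<Sum>t\<in>T. mon (g t)) \<subseteq> g ` T"
  using keys_sum[of "\<lambda>t. mon (g t)" T] by auto

lemma keys_mon_sumE: "c \<in> ks (\<Sum>t\<in>T. mon (g t)) \<Longrightarrow> \<exists>t\<in>T. c = g t"
  using keys_mon_sum by blast

lemma keys_dmon: assumes c: "c \<in> ks (dmon k b)" shows "dstep k b c"
proof (cases "lk b (Suc k) \<le> lk b k")
  case True
  have cin: "c \<in> ks (\<Sum>t<lk b k - lk b (Suc k). mon (upd2 b k (lk b (Suc k) + t) (lk b k - 1 - t)))"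
    using c True by (simp add: dmon_def)
  obtain t where "t < lk b k - lk b (Suc k)" "c = upd2 b k (lk b (Suc k) + t) (lk b k - 1 - t)"
    using keys_mon_sumE[OF cin] by auto
  then show ?thesis unfolding dstep_def
    by (intro exI[of _ "lk b (Suc k) + t"] exI[of _ "lk b k - 1 - t"]) auto
next
  case False
  have cin: "c \<in> ks (\<Sum>t<lk b (Suc k) - lk b k. mon (upd2 b k (lk b k + t) (lk b (Suc k) - 1 - t)))"
    using c False by (simp add: dmon_def)
  obtain t where "t < lk b (Suc k) - lk b k" "c = upd2 b k (lk b k + t) (lk b (Suc k) - 1 - t)"
    using keys_mon_sumE[OF cin] by auto
  then show ?thesis unfolding dstep_def
    by (intro exI[of _ "lk b k + t"] exI[of _ "lk b (Suc k) - 1 - t"]) auto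
qed

lemma keys_divdiff: "c \<in> ks (divdiff k f) \<Longrightarrow> \<exists>b\<in>ks f. dstep k b c"
  unfolding divdiff_dd dd_def using keys_frag_extend[of "dmon k" f] keys_dmon by blast


lemma divdiff_sym[simp]: "swap_poly k (divdiff k f) = divdiff k f"
proof -
  have "(var k - var (Suc k)) * swap_poly k (divdiff k f) = f - swap_poly k f"
  proof -
    have "swap_poly k ((var k - var (Suc k)) * divdiff k f) = swap_poly k (f - swap_poly k f)"
      by (simp add: divdiff_prop)
    hence "(var (Suc k) - var k) * swap_poly k (divdiff k f) = swap_poly k f - f"
      by (simp add: swap_poly_mult swap_poly_diff)
    thus ?thesis by (simp add: algebra_simps)
  qed
  hence "divdiff k f = swap_poly k (divdiff k f)" by (rule divdiff_eq)
  thus ?thesis by simp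
qed

lemma divdiff_of_sym: "swap_poly k f = f \<Longrightarrow> divdiff k f = 0"
  by (rule divdiff_eq) simp

lemma sym_of_divdiff_zero: "divdiff k f = 0 \<Longrightarrow> swap_poly k f = f"
  using divdiff_prop[of k f] by simp

lemma divdiff_mult_sym: assumes "swap_poly k a = a" shows "divdiff k (a * f) = a * divdiff k f"
proof (rule divdiff_eq)
  have "(var k - var (Suc k)) * (a * divdiff k f) = a * ((var k - var (Suc k)) * divdiff k f)"
    by (simp only: mult.left_commute)
  also have "\<dots> = a * (f - swap_poly k f)" by (simp only: divdiff_prop)
  also have "\<dots> = a * f - swap_poly k (a * f)" using assms by (simp add: swap_poly_mult algebra_simps)
  finally show "(var k - var (Suc k)) * (a * divdiff k f) = a * f - swap_poly k (a * f)" .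
qed

lemma divdiff_mult_sym2: "swap_poly k a = a \<Longrightarrow> divdiff k (f * a) = divdiff k f * a"
  using divdiff_mult_sym[of k a f] by (simp add: mult.commute)

lemma divdiff_leibniz: "divdiff k (f * g) = divdiff k f * g + swap_poly k f * divdiff k g"
proof (rule divdiff_eq)
  have "(var k - var (Suc k)) * (divdiff k f * g + swap_poly k f * divdiff k g) =
     ((var k - var (Suc k)) * divdiff k f) * g + swap_poly k f * ((var k - var (Suc k)) * divdiff k g)"
    by (simp add: algebra_simps)
  also have "\<dots> = (f - swap_poly k f) * g + swap_poly k f * (g - swap_poly k g)"
    by (simp only: divdiff_prop)
  also have "\<dots> = f * g - swap_poly k (f * g)"
    by (simp add: swap_poly_mult algebra_simps)
  finally show "(var k - var (Suc k)) * (divdiff k f * g + swap_poly k f * divdiff k g) = f * g - swap_poly k (f * g)" .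
qed

lemma divdiff_add: "divdiff k (f + g) = divdiff k f + divdiff k g"
proof (rule divdiff_eq)
  have "(var k - var (Suc k)) * (divdiff k f + divdiff k g) =
    (var k - var (Suc k)) * divdiff k f + (var k - var (Suc k)) * divdiff k g"
    by (simp only: distrib_left)
  also have "\<dots> = (f - swap_poly k f) + (g - swap_poly k g)" by (simp only: divdiff_prop)
  also have "\<dots> = (f + g) - swap_poly k (f + g)" by (simp add: swap_poly_add)
  finally show "(var k - var (Suc k)) * (divdiff k f + divdiff k g) = (f + g) - swap_poly k (f + g)" .
qed

lemma divdiff_diff: "divdiff k (f - g) = divdiff k f - divdiff k g"
proof (rule divdiff_eq)
  have "(var k - var (Suc k)) * (divdiff k f - divdiff k g) =
    (var k - var (Suc k)) * divdiff k f - (var k - var (Suc k)) * divdiff k g"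
    by (simp only: right_diff_distrib)
  also have "\<dots> = (f - swap_poly k f) - (g - swap_poly k g)" by (simp only: divdiff_prop)
  also have "\<dots> = (f - g) - swap_poly k (f - g)" by (simp add: swap_poly_diff)
  finally show "(var k - var (Suc k)) * (divdiff k f - divdiff k g) = (f - g) - swap_poly k (f - g)" .
qed

lemma divdiff_zero[simp]: "divdiff k 0 = 0"
  by (rule divdiff_of_sym) simp

lemma swap_divdiff_commute:
  assumes "j \<noteq> k" "j \<noteq> Suc k" "k \<noteq> Suc j"
  shows "swap_poly j (divdiff k f) = divdiff k (swap_poly j f)"
proof (rule divdiff_eq[symmetric])
  have "swap_poly j ((var k - var (Suc k)) * divdiff k f) = swap_poly j (f - swap_poly k f)"
    by (simp add: divdiff_prop)
  moreover have "swap_poly j (var k) = var k" "swap_poly j (var (Suc k)) = var (Suc k)"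
    using assms by (auto intro: swap_poly_var_simps)
  ultimately show "(var k - var (Suc k)) * swap_poly j (divdiff k f) = swap_poly j f - swap_poly k (swap_poly j f)"
    using swap_poly_commute[of k j f] assms by (simp add: swap_poly_mult swap_poly_diff)
qed

lemma divdiff_commute:
  assumes "j \<noteq> i" "j \<noteq> Suc i" "i \<noteq> Suc j"
  shows "divdiff i (divdiff j f) = divdiff j (divdiff i f)"
proof -
  let ?A = "var i - var (Suc i)" and ?B = "var j - var (Suc j)"
  have "?A * ?B * divdiff i (divdiff j f) = ?B * (divdiff j f - swap_poly i (divdiff j f))"
    by (simp add: divdiff_prop mult.assoc mult.left_commute[of ?A])
  also have "\<dots> = ?B * divdiff j f - ?B * divdiff j (swap_poly i f)"
    using assms by (simp add: swap_divdiff_commute algebra_simps)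
  also have "\<dots> = (f - swap_poly j f) - (swap_poly i f - swap_poly j (swap_poly i f))"
    by (simp add: divdiff_prop)
  finally have 1: "?A * ?B * divdiff i (divdiff j f) = (f - swap_poly j f) - (swap_poly i f - swap_poly j (swap_poly i f))" .
  have "?A * ?B * divdiff j (divdiff i f) = ?A * (divdiff i f - swap_poly j (divdiff i f))"
    by (simp add: divdiff_prop mult.assoc)
  also have "\<dots> = ?A * divdiff i f - ?A * divdiff i (swap_poly j f)"
    using assms by (simp add: swap_divdiff_commute algebra_simps)
  also have "\<dots> = (f - swap_poly i f) - (swap_poly j f - swap_poly i (swap_poly j f))"
    by (simp add: divdiff_prop)
  finally have 2: "?A * ?B * divdiff j (divdiff i f) = (f - swap_poly i f) - (swap_poly j f - swap_poly i (swap_poly j f))" .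
  have c: "swap_poly i (swap_poly j f) = swap_poly j (swap_poly i f)"
    using assms by (intro swap_poly_commute) auto
  have "?A * ?B * divdiff i (divdiff j f) = ?A * ?B * divdiff j (divdiff i f)"
    unfolding 1 2 c by (simp add: algebra_simps)
  moreover have "?A * ?B \<noteq> 0" using var_diff_nz by simp
  ultimately show ?thesis by simp
qed


lemma braid_aux:
  fixes i :: nat and f :: mpoly
  defines "A \<equiv> var i - var (Suc i)" and "B \<equiv> var (Suc i) - var (Suc (Suc i))"
      and "C \<equiv> var i - var (Suc (Suc i))"
  shows "A * B * C * divdiff i (divdiff (Suc i) (divdiff i f)) =
     f - swap_poly i f - swap_poly (Suc i) f + swap_poly (Suc i) (swap_poly i f)
     + swap_poly i (swap_poly (Suc i) f) - swap_poly i (swap_poly (Suc i) (swap_poly i f))"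
proof -
  define g1 where "g1 = divdiff i f"
  define g2 where "g2 = divdiff (Suc i) g1"
  define g3 where "g3 = divdiff i g2"
  have e1: "A * g1 = f - swap_poly i f" unfolding A_def g1_def by (rule divdiff_prop)
  have e2: "B * g2 = g1 - swap_poly (Suc i) g1" unfolding B_def g2_def by (rule divdiff_prop)
  have e3: "A * g3 = g2 - swap_poly i g2" unfolding A_def g3_def by (rule divdiff_prop)
  have s1: "swap_poly i g1 = g1" unfolding g1_def by simp
  have sB: "swap_poly i B = C" unfolding B_def C_def by (simp add: swap_poly_diff)
  have sA: "swap_poly (Suc i) A = C" unfolding A_def C_def by (simp add: swap_poly_diff)
  have sC: "swap_poly i C = B" unfolding B_def C_def by (simp add: swap_poly_diff)
  have e2': "C * swap_poly i g2 = g1 - swap_poly i (swap_poly (Suc i) g1)"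
    using arg_cong[OF e2, of "swap_poly i"] by (simp add: swap_poly_mult swap_poly_diff sB s1)
  have e1': "C * swap_poly (Suc i) g1 = swap_poly (Suc i) f - swap_poly (Suc i) (swap_poly i f)"
    using arg_cong[OF e1, of "swap_poly (Suc i)"] by (simp add: swap_poly_mult swap_poly_diff sA)
  have e1'': "B * swap_poly i (swap_poly (Suc i) g1) = swap_poly i (swap_poly (Suc i) f) - swap_poly i (swap_poly (Suc i) (swap_poly i f))"
    using arg_cong[OF e1', of "swap_poly i"] by (simp add: swap_poly_mult swap_poly_diff sC)
  have CB: "C - B = A" unfolding A_def B_def C_def by simp
  have "A * B * C * g3 = B * C * (A * g3)" by (simp add: algebra_simps)
  also have "\<dots> = C * (B * g2) - B * (C * swap_poly i g2)" unfolding e3 by (simp add: algebra_simps)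
  also have "\<dots> = C * (g1 - swap_poly (Suc i) g1) - B * (g1 - swap_poly i (swap_poly (Suc i) g1))"
    unfolding e2 e2' ..
  also have "\<dots> = (C - B) * g1 - C * swap_poly (Suc i) g1 + B * swap_poly i (swap_poly (Suc i) g1)"
    by (simp add: algebra_simps)
  also have "\<dots> = A * g1 - C * swap_poly (Suc i) g1 + B * swap_poly i (swap_poly (Suc i) g1)"
    unfolding CB ..
  also have "\<dots> = (f - swap_poly i f) - (swap_poly (Suc i) f - swap_poly (Suc i) (swap_poly i f))
     + (swap_poly i (swap_poly (Suc i) f) - swap_poly i (swap_poly (Suc i) (swap_poly i f)))"
    unfolding e1 e1' e1'' ..
  finally show ?thesis unfolding g3_def g2_def g1_def by (simp add: algebra_simps)
qed

lemma braid_aux2: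
  fixes i :: nat and f :: mpoly
  defines "A \<equiv> var i - var (Suc i)" and "B \<equiv> var (Suc i) - var (Suc (Suc i))"
      and "C \<equiv> var i - var (Suc (Suc i))"
  shows "A * B * C * divdiff (Suc i) (divdiff i (divdiff (Suc i) f)) =
     f - swap_poly (Suc i) f - swap_poly i f + swap_poly i (swap_poly (Suc i) f)
     + swap_poly (Suc i) (swap_poly i f) - swap_poly (Suc i) (swap_poly i (swap_poly (Suc i) f))"
proof -
  define g1 where "g1 = divdiff (Suc i) f"
  define g2 where "g2 = divdiff i g1"
  define g3 where "g3 = divdiff (Suc i) g2"
  have e1: "B * g1 = f - swap_poly (Suc i) f" unfolding B_def g1_def by (rule divdiff_prop)
  have e2: "A * g2 = g1 - swap_poly i g1" unfolding A_def g2_def by (rule divdiff_prop)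
  have e3: "B * g3 = g2 - swap_poly (Suc i) g2" unfolding B_def g3_def by (rule divdiff_prop)
  have s1: "swap_poly (Suc i) g1 = g1" unfolding g1_def by simp
  have sB: "swap_poly i B = C" unfolding B_def C_def by (simp add: swap_poly_diff)
  have sA: "swap_poly (Suc i) A = C" unfolding A_def C_def by (simp add: swap_poly_diff)
  have sC: "swap_poly (Suc i) C = A" unfolding A_def C_def by (simp add: swap_poly_diff)
  have e2': "C * swap_poly (Suc i) g2 = g1 - swap_poly (Suc i) (swap_poly i g1)"
    using arg_cong[OF e2, of "swap_poly (Suc i)"] by (simp add: swap_poly_mult swap_poly_diff sA s1)
  have e1': "C * swap_poly i g1 = swap_poly i f - swap_poly i (swap_poly (Suc i) f)"
    using arg_cong[OF e1, of "swap_poly i"] by (simp add: swap_poly_mult swap_poly_diff sB)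
  have e1'': "A * swap_poly (Suc i) (swap_poly i g1) = swap_poly (Suc i) (swap_poly i f) - swap_poly (Suc i) (swap_poly i (swap_poly (Suc i) f))"
    using arg_cong[OF e1', of "swap_poly (Suc i)"] by (simp add: swap_poly_mult swap_poly_diff sC)
  have CA: "C - A = B" unfolding A_def B_def C_def by simp
  have "A * B * C * g3 = A * C * (B * g3)" by (simp add: algebra_simps)
  also have "\<dots> = C * (A * g2) - A * (C * swap_poly (Suc i) g2)" unfolding e3 by (simp add: algebra_simps)
  also have "\<dots> = C * (g1 - swap_poly i g1) - A * (g1 - swap_poly (Suc i) (swap_poly i g1))"
    unfolding e2 e2' ..
  also have "\<dots> = (C - A) * g1 - C * swap_poly i g1 + A * swap_poly (Suc i) (swap_poly i g1)"
    by (simp add: algebra_simps)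
  also have "\<dots> = B * g1 - C * swap_poly i g1 + A * swap_poly (Suc i) (swap_poly i g1)"
    unfolding CA ..
  also have "\<dots> = (f - swap_poly (Suc i) f) - (swap_poly i f - swap_poly i (swap_poly (Suc i) f))
     + (swap_poly (Suc i) (swap_poly i f) - swap_poly (Suc i) (swap_poly i (swap_poly (Suc i) f)))"
    unfolding e1 e1' e1'' ..
  finally show ?thesis unfolding g3_def g2_def g1_def by (simp add: algebra_simps)
qed

lemma var_diff_nz2: "var i - var (Suc (Suc i)) \<noteq> 0"
proof
  assume "var i - var (Suc (Suc i)) = 0"
  hence "lk (var i - var (Suc (Suc i))) (Poly_Mapping.single i 1) = 0" by simp
  moreover have "Poly_Mapping.single (Suc (Suc i)) (1::nat) \<noteq> Poly_Mapping.single i 1"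
    by (metis lookup_single_eq lookup_single_not_eq Suc_n_not_n lessI less_irrefl_nat zero_neq_one
        n_not_Suc_n Suc_lessD)
  ultimately show False by (simp add: var_def lookup_minus lookup_single)
qed

lemma divdiff_braid:
  "divdiff i (divdiff (Suc i) (divdiff i f)) = divdiff (Suc i) (divdiff i (divdiff (Suc i) f))"
proof -
  let ?A = "var i - var (Suc i)" and ?B = "var (Suc i) - var (Suc (Suc i))"
      and ?C = "var i - var (Suc (Suc i))"
  have "?A * ?B * ?C * divdiff i (divdiff (Suc i) (divdiff i f)) =
        ?A * ?B * ?C * divdiff (Suc i) (divdiff i (divdiff (Suc i) f))"
    unfolding braid_aux braid_aux2 swap_poly_braid by (simp add: algebra_simps)
  moreover have "?A * ?B * ?C \<noteq> 0" using var_diff_nz var_diff_nz2 by simp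
  ultimately show ?thesis by simp
qed


section \<open>Evaluation\<close>

definition monval :: "(nat \<Rightarrow> int) \<Rightarrow> (nat \<Rightarrow>\<^sub>0 nat) \<Rightarrow> int" where
  "monval pt m = (\<Prod>i\<in>ks m. pt i ^ lk m i)"

lemma monval_superset: "finite S \<Longrightarrow> ks m \<subseteq> S \<Longrightarrow> monval pt m = (\<Prod>i\<in>S. pt i ^ lk m i)"
  unfolding monval_def
  by (rule prod.mono_neutral_left) (auto simp: in_keys_iff)

lemma monval_add: "monval pt (a + b) = monval pt a * monval pt b"
proof -
  let ?S = "ks a \<union> ks b"
  have "monval pt (a + b) = (\<Prod>i\<in>?S. pt i ^ lk (a + b) i)"
    by (rule monval_superset) (use keys_add[of a b] in auto)
  also have "\<dots> = (\<Prod>i\<in>?S. pt i ^ lk a i) * (\<Prod>i\<in>?S. pt i ^ lk b i)"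
    by (simp add: lookup_add power_add prod.distrib)
  also have "\<dots> = monval pt a * monval pt b"
    using monval_superset[of ?S a pt] monval_superset[of ?S b pt] by simp
  finally show ?thesis .
qed

lemma monval_zero[simp]: "monval pt 0 = 1"
  by (simp add: monval_def)

definition evalp :: "(nat \<Rightarrow> int) \<Rightarrow> mpoly \<Rightarrow> int" where
  "evalp pt f = (\<Sum>m\<in>ks f. lk f m * monval pt m)"

lemma evalp_superset: "finite S \<Longrightarrow> ks f \<subseteq> S \<Longrightarrow> evalp pt f = (\<Sum>m\<in>S. lk f m * monval pt m)"
  unfolding evalp_def
  by (rule sum.mono_neutral_left) (auto simp: in_keys_iff)

lemma evalp_add: "evalp pt (f + g) = evalp pt f + evalp pt g"
proof -
  let ?S = "ks f \<union> ks g"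
  have "evalp pt (f + g) = (\<Sum>m\<in>?S. lk (f + g) m * monval pt m)"
    by (rule evalp_superset) (use keys_add[of f g] in auto)
  also have "\<dots> = (\<Sum>m\<in>?S. lk f m * monval pt m) + (\<Sum>m\<in>?S. lk g m * monval pt m)"
    by (simp add: lookup_add algebra_simps sum.distrib)
  also have "\<dots> = evalp pt f + evalp pt g"
    using evalp_superset[of ?S f pt] evalp_superset[of ?S g pt] by simp
  finally show ?thesis .
qed

lemma evalp_uminus: "evalp pt (- f) = - evalp pt f"
  by (simp add: evalp_def sum_negf)

lemma evalp_diff: "evalp pt (f - g) = evalp pt f - evalp pt g"
  using evalp_add[of pt f "- g"] by (simp add: evalp_uminus)

lemma evalp_zero[simp]: "evalp pt 0 = 0"
  by (simp add: evalp_def)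

lemma evalp_single: "evalp pt (Poly_Mapping.single m c) = c * monval pt m"
  by (cases "c = 0") (simp_all add: evalp_def)

lemma evalp_mult: "evalp pt (f * g) = evalp pt f * evalp pt g"
proof -
  have one: "evalp pt (frag_of a * g) = evalp pt (frag_of a) * evalp pt g" for a
    using subset_UNIV
  proof (induction g rule: frag_induction)
    case (one x)
    then show ?case by (simp add: mult_single evalp_single monval_add)
  next
    case (diff a b)
    then show ?case by (simp add: algebra_simps evalp_diff)
  qed auto
  show ?thesis
    using subset_UNIV
  proof (induction f rule: frag_induction)
    case (diff a b)
    then show ?case by (simp add: algebra_simps evalp_diff)
  qed (auto simp: one)
qed

lemma evalp_one[simp]: "evalp pt 1 = 1"
  by (metis evalp_single monval_zero mult_1 one_poly_mapping.abs_eq single_one)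

lemma evalp_var[simp]: "evalp pt (var k) = pt k"
  by (simp add: var_def evalp_single monval_def)

lemma evalp_power: "evalp pt (f ^ n) = evalp pt f ^ n"
  by (induction n) (simp_all add: evalp_mult)

lemma evalp_prod: "evalp pt (prod F S) = prod (\<lambda>x. evalp pt (F x)) S"
  by (induction S rule: infinite_finite_induct) (simp_all add: evalp_mult)

lemma keys_swap_mon: "ks (swap_mon i b) = tr i ` ks b"
proof -
  have "k \<in> ks (swap_mon i b) \<longleftrightarrow> k \<in> tr i ` ks b" for k
  proof -
    have "k \<in> tr i ` ks b \<longleftrightarrow> tr i k \<in> ks b"
    proof
      assume "k \<in> tr i ` ks b"
      then obtain j where "j \<in> ks b" "k = tr i j" by auto
      thus "tr i k \<in> ks b" by simp
    next
      assume "tr i k \<in> ks b"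
      hence "tr i (tr i k) \<in> tr i ` ks b" by blast
      thus "k \<in> tr i ` ks b" by simp
    qed
    thus ?thesis by (simp add: in_keys_iff)
  qed
  thus ?thesis by blast
qed

lemma monval_swap: "monval pt (swap_mon i b) = monval (\<lambda>j. pt (tr i j)) b"
proof -
  have "monval pt (swap_mon i b) = (\<Prod>k\<in>tr i ` ks b. pt k ^ lk b (tr i k))"
    by (simp add: monval_def keys_swap_mon)
  also have "\<dots> = (\<Prod>j\<in>ks b. pt (tr i j) ^ lk b (tr i (tr i j)))"
    by (subst prod.reindex) (auto intro: inj_on_subset[OF inj_tr])
  also have "\<dots> = monval (\<lambda>j. pt (tr i j)) b" by (simp add: monval_def)
  finally show ?thesis .
qed

lemma evalp_swap: "evalp pt (swap_poly i f) = evalp (\<lambda>j. pt (tr i j)) f"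
  using subset_UNIV
proof (induction f rule: frag_induction)
  case (one x)
  then show ?case by (simp add: swap_poly_single evalp_single monval_swap)
next
  case (diff a b)
  then show ?case by (simp add: evalp_diff swap_poly_diff)
qed simp

abbreviation ev :: "nat \<Rightarrow> mpoly \<Rightarrow> int" where
  "ev k \<equiv> evalp (\<lambda>j. if j = k then 1 else 0)"

lemma tr_eq_k: "tr k j = k \<longleftrightarrow> j = Suc k"
  by (cases "j = k"; cases "j = Suc k") (auto simp: transpose_def)

lemma ev_swap: "ev k (swap_poly k f) = ev (Suc k) f"
proof -
  have "(\<lambda>j. if tr k j = k then 1 else 0) = (\<lambda>j. if j = Suc k then (1::int) else 0)"
    by (rule ext) (simp only: tr_eq_k)
  thus ?thesis by (simp only: evalp_swap)
qed

lemma ev_divdiff: "ev k (divdiff k f) = ev k f - ev (Suc k) f"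
proof -
  have "ev k ((var k - var (Suc k)) * divdiff k f) = ev k (f - swap_poly k f)"
    by (simp add: divdiff_prop)
  thus ?thesis by (simp add: evalp_mult evalp_diff ev_swap)
qed

lemma monval_const: "monval (\<lambda>_. 0) m = (if m = 0 then 1 else 0)"
proof (cases "m = 0")
  case False
  then obtain i where i: "i \<in> ks m" by (metis keys_eq_empty ex_in_conv)
  have "monval (\<lambda>_. 0) m = 0" unfolding monval_def
    using i by (subst prod_zero_iff) (auto simp: in_keys_iff)
  with False show ?thesis by simp
qed simp

lemma evalp_const: "evalp (\<lambda>_. 0) f = lk f 0"
proof -
  have "evalp (\<lambda>_. 0) f = (\<Sum>m\<in>insert 0 (ks f). lk f m * monval (\<lambda>_. 0) m)"
    by (rule evalp_superset) auto
  also have "\<dots> = (\<Sum>m\<in>insert 0 (ks f). if m = 0 then lk f 0 else 0)"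
    by (rule sum.cong) (auto simp: monval_const)
  also have "\<dots> = lk f 0" by (simp add: sum.delta)
  finally show ?thesis .
qed


section \<open>Complete homogeneous polynomials\<close>

definition deg :: "(nat \<Rightarrow>\<^sub>0 nat) \<Rightarrow> nat" where
  "deg m = (\<Sum>k\<in>ks m. lk m k)"

lemma deg_superset: "finite S \<Longrightarrow> ks m \<subseteq> S \<Longrightarrow> deg m = (\<Sum>k\<in>S. lk m k)"
  unfolding deg_def by (rule sum.mono_neutral_left) (auto simp: in_keys_iff)

lemma deg_add: "deg (a + b) = deg a + deg b"
proof -
  let ?S = "ks a \<union> ks b"
  have "deg (a + b) = (\<Sum>k\<in>?S. lk (a + b) k)"
    by (rule deg_superset) (use keys_add[of a b] in auto)
  also have "\<dots> = (\<Sum>k\<in>?S. lk a k) + (\<Sum>k\<in>?S. lk b k)"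
    by (simp add: lookup_add sum.distrib)
  also have "\<dots> = deg a + deg b"
    using deg_superset[of ?S a] deg_superset[of ?S b] by simp
  finally show ?thesis .
qed

lemma deg_single[simp]: "deg (Poly_Mapping.single k c) = c"
  by (cases "c = 0") (simp_all add: deg_def)

lemma deg_zero[simp]: "deg 0 = 0"
  by (simp add: deg_def)

lemma lk_le_deg: "lk m k \<le> deg m"
proof (cases "k \<in> ks m")
  case True
  then show ?thesis unfolding deg_def by (rule member_le_sum) auto
next
  case False
  then show ?thesis by (simp add: in_keys_iff)
qed

lemma deg_eq_0_iff: "deg m = 0 \<longleftrightarrow> m = 0"
proof
  assume "deg m = 0"
  hence "\<forall>k. lk m k = 0" using lk_le_deg by (metis le_zero_eq)
  thus "m = 0" by (intro poly_mapping_eqI) simp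
qed simp

definition monset :: "nat set \<Rightarrow> nat \<Rightarrow> (nat \<Rightarrow>\<^sub>0 nat) set" where
  "monset S d = {m. ks m \<subseteq> S \<and> deg m = d}"

definition G :: "nat set \<Rightarrow> nat \<Rightarrow> mpoly" where
  "G S d = (\<Sum>m\<in>monset S d. mon m)"

lemma hcomp_G: "hcomp i j = G {1..i} j"
  unfolding hcomp_def G_def monset_def deg_def ..

lemma finite_monset: assumes "finite S" shows "finite (monset S d)"
proof -
  have inj: "inj_on (\<lambda>m. restrict (lk m) S) (monset S d)"
  proof (rule inj_onI)
    fix a b assume a: "a \<in> monset S d" and b: "b \<in> monset S d"
      and eq: "restrict (lk a) S = restrict (lk b) S"
    show "a = b"
    proof (rule poly_mapping_eqI)
      fix k show "lk a k = lk b k"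
      proof (cases "k \<in> S")
        case True
        then show ?thesis using fun_cong[OF eq, of k] by simp
      next
        case False
        hence "k \<notin> ks a" "k \<notin> ks b" using a b by (auto simp: monset_def)
        thus ?thesis by (simp add: in_keys_iff)
      qed
    qed
  qed
  have "(\<lambda>m. restrict (lk m) S) ` monset S d \<subseteq> PiE S (\<lambda>_. {0..d})"
    using lk_le_deg by (auto simp: monset_def)
  moreover have "finite (PiE S (\<lambda>_. {0..d}))" using assms by (intro finite_PiE) auto
  ultimately have "finite ((\<lambda>m. restrict (lk m) S) ` monset S d)" by (rule finite_subset)
  thus ?thesis using inj by (rule finite_imageD)
qed

lemma lookup_G: "finite S \<Longrightarrow> lk (G S d) m = (if m \<in> monset S d then 1 else 0)"
  unfolding G_def by (simp add: lookup_sum lookup_single when_def finite_monset)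

lemma keys_G: "finite S \<Longrightarrow> ks (G S d) = monset S d"
  by (auto simp: in_keys_iff lookup_G split: if_splits)

lemma monset_empty: "monset {} d = (if d = 0 then {0} else {})"
  by (auto simp: monset_def deg_eq_0_iff)

lemma monset_zero: "monset S 0 = {0}"
  by (auto simp: monset_def deg_eq_0_iff)

lemma G_zero[simp]: "G S 0 = 1"
  by (simp add: G_def monset_zero)

lemma G_empty: "G {} d = (if d = 0 then 1 else 0)"
  by (simp add: G_def monset_empty)

lemma monset_insert:
  assumes "y \<notin> S" "d \<ge> 1"
  shows "monset (insert y S) d = monset S d \<union> (\<lambda>m. m + Poly_Mapping.single y 1) ` monset (insert y S) (d - 1)"
proof
  show "monset (insert y S) d \<subseteq> monset S d \<union> (\<lambda>m. m + Poly_Mapping.single y 1) ` monset (insert y S) (d - 1)"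
  proof
    fix m assume m: "m \<in> monset (insert y S) d"
    show "m \<in> monset S d \<union> (\<lambda>m. m + Poly_Mapping.single y 1) ` monset (insert y S) (d - 1)"
    proof (cases "lk m y = 0")
      case True
      hence "ks m \<subseteq> S" using m by (auto simp: monset_def in_keys_iff)
      thus ?thesis using m by (auto simp: monset_def)
    next
      case False
      define m' where "m' = Poly_Mapping.update y (lk m y - 1) m"
      have e: "m' + Poly_Mapping.single y 1 = m"
        by (rule poly_mapping_eqI) (use False in \<open>auto simp add: m'_def lookup_add update.rep_eq lookup_single when_def\<close>)
      have "ks m' \<subseteq> ks m \<union> {y}"
      proof
        fix x assume "x \<in> ks m'"
        thus "x \<in> ks m \<union> {y}" by (cases "x = y") (auto simp: m'_def in_keys_iff update.rep_eq)
      qed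
      hence "ks m' \<subseteq> insert y S" using m by (auto simp: monset_def)
      moreover have "deg m' = d - 1" using m deg_add[of m' "Poly_Mapping.single y 1"] e
        by (simp add: monset_def)
      ultimately have "m' \<in> monset (insert y S) (d - 1)" by (simp add: monset_def)
      with e show ?thesis by blast
    qed
  qed
next
  show "monset S d \<union> (\<lambda>m. m + Poly_Mapping.single y 1) ` monset (insert y S) (d - 1) \<subseteq> monset (insert y S) d"
  proof
    fix m assume "m \<in> monset S d \<union> (\<lambda>m. m + Poly_Mapping.single y 1) ` monset (insert y S) (d - 1)"
    then show "m \<in> monset (insert y S) d"
    proof
      assume "m \<in> monset S d" thus ?thesis by (auto simp: monset_def)
    next
      assume "m \<in> (\<lambda>m. m + Poly_Mapping.single y 1) ` monset (insert y S) (d - 1)"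
      then obtain m' where m': "m' \<in> monset (insert y S) (d - 1)" "m = m' + Poly_Mapping.single y 1" by auto
      have "ks m \<subseteq> insert y S" using m' keys_add[of m' "Poly_Mapping.single y 1"]
        by (auto simp: monset_def)
      moreover have "deg m = d" using m' assms by (simp add: deg_add monset_def)
      ultimately show ?thesis by (simp add: monset_def)
    qed
  qed
qed

lemma G_rec:
  assumes "finite S" "y \<notin> S" "d \<ge> 1"
  shows "G (insert y S) d = G S d + var y * G (insert y S) (d - 1)"
proof -
  let ?f = "\<lambda>m. m + Poly_Mapping.single y (1::nat)"
  have yk: "y \<in> ks (m + Poly_Mapping.single y 1)" for m :: "nat \<Rightarrow>\<^sub>0 nat"
    by (simp add: in_keys_iff lookup_add)
  have disj: "monset S d \<inter> ?f ` monset (insert y S) (d - 1) = {}"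
    using assms(2) yk by (force simp: monset_def)
  have inj: "inj_on ?f (monset (insert y S) (d - 1))" by (rule inj_onI) simp
  have "G (insert y S) d = G S d + (\<Sum>m\<in>?f ` monset (insert y S) (d - 1). mon m)"
    unfolding G_def monset_insert[OF assms(2,3)]
    by (rule sum.union_disjoint) (use assms disj in \<open>auto intro: finite_monset\<close>)
  also have "(\<Sum>m\<in>?f ` monset (insert y S) (d - 1). mon m) = (\<Sum>m\<in>monset (insert y S) (d - 1). mon (?f m))"
    by (rule sum.reindex[OF inj, unfolded comp_def])
  also have "\<dots> = var y * G (insert y S) (d - 1)"
    unfolding G_def sum_distrib_left by (simp add: var_mult_mon)
  finally show ?thesis .
qed

lemma deg_swap_mon: "deg (swap_mon k m) = deg m"
proof -
  have "deg (swap_mon k m) = (\<Sum>j\<in>tr k ` ks m. lk m (tr k j))"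
    by (simp add: deg_def keys_swap_mon)
  also have "\<dots> = (\<Sum>i\<in>ks m. lk m (tr k (tr k i)))"
    by (subst sum.reindex) (auto intro: inj_on_subset[OF inj_tr])
  finally show ?thesis by (simp add: deg_def)
qed

lemma swap_monset: "swap_mon k ` monset S d = monset (tr k ` S) d"
proof
  show "swap_mon k ` monset S d \<subseteq> monset (tr k ` S) d"
    by (auto simp: monset_def keys_swap_mon deg_swap_mon) blast
next
  show "monset (tr k ` S) d \<subseteq> swap_mon k ` monset S d"
  proof
    fix m assume m: "m \<in> monset (tr k ` S) d"
    have "ks (swap_mon k m) \<subseteq> S"
    proof
      fix x assume "x \<in> ks (swap_mon k m)"
      then obtain j where "j \<in> ks m" "x = tr k j" by (auto simp: keys_swap_mon)
      with m obtain s where "s \<in> S" "j = tr k s" by (auto simp: monset_def)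
      with \<open>x = tr k j\<close> show "x \<in> S" by simp
    qed
    hence "swap_mon k m \<in> monset S d" using m by (simp add: monset_def deg_swap_mon)
    thus "m \<in> swap_mon k ` monset S d"
      by (metis image_eqI swap_mon_swap_mon)
  qed
qed

lemma swap_G: "swap_poly k (G S d) = G (tr k ` S) d"
proof -
  have "swap_poly k (G S d) = (\<Sum>m\<in>monset S d. mon (swap_mon k m))"
    by (simp add: G_def swap_poly_sum swap_poly_single)
  also have "\<dots> = (\<Sum>m\<in>swap_mon k ` monset S d. mon m)"
    by (rule sum.reindex[symmetric, unfolded comp_def]) (rule inj_on_subset[OF inj_swap_mon], simp)
  finally show ?thesis by (simp add: swap_monset G_def)
qed

lemma tr_image_fix: "(k \<in> S \<longleftrightarrow> Suc k \<in> S) \<Longrightarrow> tr k ` S = S"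
proof -
  assume h: "k \<in> S \<longleftrightarrow> Suc k \<in> S"
  have *: "tr k x \<in> S \<longleftrightarrow> x \<in> S" for x
    using h by (cases "x = k"; cases "x = Suc k") (auto simp: transpose_def)
  show ?thesis
  proof
    show "tr k ` S \<subseteq> S" using * by auto
    show "S \<subseteq> tr k ` S"
    proof
      fix x assume "x \<in> S"
      hence "tr k x \<in> S" using * by simp
      hence "tr k (tr k x) \<in> tr k ` S" by blast
      thus "x \<in> tr k ` S" by simp
    qed
  qed
qed

lemma hcomp_sym: "1 \<le> k \<Longrightarrow> k \<noteq> i \<Longrightarrow> swap_poly k (hcomp i d) = hcomp i d"
  unfolding hcomp_G swap_G by (subst tr_image_fix) auto

lemma hcomp_zero[simp]: "hcomp i 0 = 1"
  by (simp add: hcomp_G)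

lemma hcomp_divdiff:
  assumes "1 \<le> i" "1 \<le> d"
  shows "divdiff i (hcomp i d) = hcomp (Suc i) (d - 1)"
proof (rule divdiff_eq)
  let ?A = "{1..<i}"
  have s1: "{1..Suc i} = insert i (insert (Suc i) ?A)" using assms by auto
  have s2: "{1..Suc i} = insert (Suc i) (insert i ?A)" using assms by auto
  have s3: "{1..i} = insert i ?A" using assms by auto
  have s4: "tr i ` {1..i} = insert (Suc i) ?A"
  proof -
    have "tr i ` ?A = ?A" by (rule tr_image_fix) auto
    hence "tr i ` insert i ?A = insert (Suc i) ?A" by simp
    thus ?thesis unfolding s3[symmetric] .
  qed
  have r1: "G {1..Suc i} d = G (insert (Suc i) ?A) d + var i * G {1..Suc i} (d - 1)"
    unfolding s1 by (rule G_rec) (use assms in auto)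
  have r2: "G {1..Suc i} d = G (insert i ?A) d + var (Suc i) * G {1..Suc i} (d - 1)"
    unfolding s2 by (rule G_rec) (use assms in auto)
  have "swap_poly i (hcomp i d) = G (insert (Suc i) ?A) d"
    unfolding hcomp_G swap_G s4 ..
  moreover have "hcomp i d = G (insert i ?A) d" unfolding hcomp_G s3 ..
  ultimately show "(var i - var (Suc i)) * hcomp (Suc i) (d - 1) = hcomp i d - swap_poly i (hcomp i d)"
    using r1 r2 unfolding hcomp_G by (simp add: algebra_simps)
qed

lemma ev1_G_insert:
  assumes "finite S" "y \<notin> S" "y \<noteq> 1"
  shows "ev 1 (G (insert y S) d) = ev 1 (G S d)"
proof (cases "d = 0")
  case False
  then show ?thesis using G_rec[of S y d] assms by (simp add: evalp_add evalp_mult)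
qed simp

lemma ev1_G: "finite S \<Longrightarrow> ev 1 (G S d) = (if 1 \<in> S \<or> d = 0 then 1 else 0)"
proof (induction S arbitrary: d rule: finite_induct)
  case empty then show ?case by (simp add: G_empty)
next
  case (insert y S)
  show ?case
  proof (cases "y = 1")
    case True
    show ?thesis
    proof (induction d)
      case 0 then show ?case by simp
    next
      case (Suc d)
      have "G (insert y S) (Suc d) = G S (Suc d) + var y * G (insert y S) d"
        using G_rec[of S y "Suc d"] insert by simp
      moreover have "ev 1 (G S (Suc d)) = 0" using insert.IH[of "Suc d"] insert.hyps True by simp
      ultimately show ?case using Suc True by (simp add: evalp_add evalp_mult)
    qed
  next
    case False
    then show ?thesis using ev1_G_insert[of S y d] insert by simp
  qed
qed

lemma ev1_hcomp: "1 \<le> i \<Longrightarrow> ev 1 (hcomp i d) = 1"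
  unfolding hcomp_G using ev1_G[of "{1..i}" d] by simp

lemma hcomp_const: "lk (hcomp i d) 0 = (if d = 0 then 1 else 0)"
  by (auto simp: hcomp_G lookup_G monset_def)

lemma keys_hcomp: "m \<in> ks (hcomp i d) \<Longrightarrow> ks m \<subseteq> {1..i} \<and> deg m = d"
  by (simp add: hcomp_G keys_G monset_def)


section \<open>Permutation combinatorics\<close>

definition invs :: "nat \<Rightarrow> (nat \<Rightarrow> nat) \<Rightarrow> (nat \<times> nat) set" where
  "invs n w = {(i, j). i \<in> {1..n} \<and> j \<in> {1..n} \<and> i < j \<and> w i > w j}"

lemma perm_length_invs: "perm_length n w = card (invs n w)"
  by (simp add: perm_length_def invs_def)

lemma finite_invs: "finite (invs n w)"
  by (rule finite_subset[of _ "{1..n} \<times> {1..n}"]) (auto simp: invs_def)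

lemma perm_length_le: "perm_length n w \<le> n * n"
proof -
  have "card (invs n w) \<le> card ({1..n} \<times> {1..n})"
    by (rule card_mono) (auto simp: invs_def)
  thus ?thesis by (simp add: perm_length_invs card_cartesian_product)
qed

lemma stransp_tr: "stransp k = tr k"
  by (rule ext) (simp add: stransp_def)

lemma tr_order: "i < j \<Longrightarrow> (i, j) \<noteq> (k, Suc k) \<Longrightarrow> tr k i < tr k j"
  by (cases "i = k"; cases "i = Suc k"; cases "j = k"; cases "j = Suc k") (auto simp: transpose_def)

lemma tr_range: "1 \<le> k \<Longrightarrow> Suc k \<le> n \<Longrightarrow> i \<in> {1..n} \<Longrightarrow> tr k i \<in> {1..n}"
  by (cases "i = k"; cases "i = Suc k") (auto simp: transpose_def)

lemma invs_swap_map: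
  assumes "1 \<le> k" "Suc k \<le> n" "(i, j) \<in> invs n (w \<circ> tr k) - {(k, Suc k)}"
  shows "(tr k i, tr k j) \<in> invs n w - {(k, Suc k)}"
proof -
  from assms(3) have ij: "i \<in> {1..n}" "j \<in> {1..n}" "i < j" "w (tr k i) > w (tr k j)" "(i, j) \<noteq> (k, Suc k)"
    by (auto simp: invs_def)
  have "tr k i < tr k j" using tr_order[OF ij(3,5)] .
  moreover have "(tr k i, tr k j) \<noteq> (k, Suc k)"
  proof
    assume "(tr k i, tr k j) = (k, Suc k)"
    hence "i = Suc k" "j = k" by (metis prod.inject tr_tr transpose_apply_first transpose_apply_second)+
    with ij(3) show False by simp
  qed
  ultimately show ?thesis using ij tr_range[OF assms(1,2)] by (auto simp: invs_def)
qed

lemma card_invs_swap: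
  assumes "1 \<le> k" "Suc k \<le> n"
  shows "card (invs n (w \<circ> tr k) - {(k, Suc k)}) = card (invs n w - {(k, Suc k)})"
proof -
  let ?s = "\<lambda>(i, j). (tr k i, tr k j)"
  have inj: "inj ?s" by (rule injI) (auto, metis tr_tr, metis tr_tr)
  have w2: "(w \<circ> tr k) \<circ> tr k = w" by (rule ext) simp
  have 1: "?s ` (invs n (w \<circ> tr k) - {(k, Suc k)}) \<subseteq> invs n w - {(k, Suc k)}"
    using invs_swap_map[OF assms, of _ _ w] by auto
  have 2: "?s ` (invs n w - {(k, Suc k)}) \<subseteq> invs n (w \<circ> tr k) - {(k, Suc k)}"
    using invs_swap_map[OF assms, of _ _ "w \<circ> tr k"] unfolding w2 by auto
  show ?thesis
    using card_inj_on_le[OF inj_on_subset[OF inj subset_UNIV] 1] card_inj_on_le[OF inj_on_subset[OF inj subset_UNIV] 2]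
      finite_invs by (simp add: finite_Diff)
qed

lemma perm_length_swap:
  assumes "1 \<le> k" "k < n"
  shows "perm_length n (w \<circ> tr k) + (if w (Suc k) < w k then 1 else 0) =
         perm_length n w + (if w k < w (Suc k) then 1 else 0)"
proof -
  have a: "card (invs n v) = card (invs n v - {(k, Suc k)}) + (if (k, Suc k) \<in> invs n v then 1 else 0)" for v
    using finite_invs[of n v] card_Suc_Diff1[of "invs n v" "(k, Suc k)"]
    by (cases "(k, Suc k) \<in> invs n v") simp_all
  have b: "(k, Suc k) \<in> invs n v \<longleftrightarrow> v (Suc k) < v k" for v using assms by (auto simp: invs_def)
  show ?thesis
    unfolding perm_length_invs a[of "w \<circ> tr k"] a[of w] b card_invs_swap[OF assms(1) Suc_leI[OF assms(2)]]
    by simp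
qed

lemma len_up:
  assumes "1 \<le> k" "k < n" "w k < w (Suc k)"
  shows "perm_length n (w \<circ> tr k) = perm_length n w + 1"
  using perm_length_swap[OF assms(1,2), of w] assms(3) by simp

lemma len_down:
  assumes "1 \<le> k" "k < n" "w (Suc k) < w k"
  shows "perm_length n (w \<circ> tr k) + 1 = perm_length n w"
  using perm_length_swap[OF assms(1,2), of w] assms(3) by simp

lemma perm_inj: "w permutes {1..n} \<Longrightarrow> w a = w b \<Longrightarrow> a = b"
  by (metis permutes_inj injD)

lemma len_up_iff:
  assumes "w permutes {1..n}" "1 \<le> k" "k < n"
  shows "perm_length n (w \<circ> tr k) = perm_length n w + 1 \<longleftrightarrow> w k < w (Suc k)"
proof
  assume h: "perm_length n (w \<circ> tr k) = perm_length n w + 1"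
  show "w k < w (Suc k)"
  proof (rule ccontr)
    assume "\<not> w k < w (Suc k)"
    moreover have "w k \<noteq> w (Suc k)" using perm_inj[OF assms(1)] by fastforce
    ultimately have "w (Suc k) < w k" by simp
    from len_down[OF assms(2,3) this] h show False by simp
  qed
qed (rule len_up[OF assms(2,3)])

lemma comp_tr_tr[simp]: "w \<circ> tr k \<circ> tr k = w"
  by (rule ext) simp

lemma permutes_tr: "w permutes {1..n} \<Longrightarrow> 1 \<le> k \<Longrightarrow> k < n \<Longrightarrow> w \<circ> tr k permutes {1..n}"
  by (rule permutes_compose[OF permutes_swap_id]) auto

lemma longest_permutes: "longest n permutes {1..n}"
  unfolding permutes_def
proof (intro conjI allI impI)
  fix x assume "x \<notin> {1..n}" thus "longest n x = x" unfolding longest_def by (rule if_not_P)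
next
  fix y show "\<exists>!x. longest n x = y"
  proof (cases "y \<in> {1..n}")
    case True
    show ?thesis
    proof (rule ex1I[of _ "n + 1 - y"])
      show "longest n (n + 1 - y) = y" using True by (auto simp: longest_def)
      fix x assume "longest n x = y"
      with True show "x = n + 1 - y" by (auto simp: longest_def split: if_splits)
    qed
  next
    case False
    show ?thesis
    proof (rule ex1I[of _ y])
      show "longest n y = y" using False unfolding longest_def by (rule if_not_P)
      fix x assume "longest n x = y"
      with False show "x = y" by (auto simp: longest_def split: if_splits)
    qed
  qed
qed

lemma no_ascent_longest:
  assumes w: "w permutes {1..n}" and dec: "\<And>k. 1 \<le> k \<Longrightarrow> k < n \<Longrightarrow> w (Suc k) < w k"
  shows "w = longest n"
proof (rule ext)
  fix i
  have chain: "w (i + d) + d \<le> w i" if "1 \<le> i" "i + d \<le> n" for i d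
    using that
  proof (induction d)
    case 0 then show ?case by simp
  next
    case (Suc d)
    have "w (Suc (i + d)) < w (i + d)" using dec[of "i + d"] Suc.prems by simp
    with Suc show ?case by simp
  qed
  have rng: "w j \<in> {1..n}" if "j \<in> {1..n}" for j
    using permutes_in_image[OF w] that by simp
  show "w i = longest n i"
  proof (cases "i \<in> {1..n}")
    case True
    have "w n + (n - i) \<le> w i" using chain[of i "n - i"] True by simp
    moreover have "w n \<ge> 1" using rng[of n] True by auto
    moreover have "w i + (i - 1) \<le> w 1" using chain[of 1 "i - 1"] True by simp
    moreover have "w 1 \<le> n" using rng[of 1] True by auto
    ultimately show ?thesis using True by (simp add: longest_def)
  next
    case False
    have "w i = i" using permutes_not_in[OF w False] .
    thus ?thesis unfolding longest_def by (subst if_not_P[OF False]) simp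
  qed
qed

section \<open>Schubert polynomials are well defined\<close>

lemma is_schubert_perm: "is_schubert n w p \<Longrightarrow> w permutes {1..n}"
proof (induction rule: is_schubert.induct)
  case top show ?case by (rule longest_permutes)
next
  case (step w p i) thus ?case unfolding stransp_tr by (intro permutes_tr)
qed

lemma is_schubert_step':
  assumes "is_schubert n v p" "1 \<le> i" "i < n" "v i > v (Suc i)"
  shows "is_schubert n (v \<circ> tr i) (divdiff i p)"
  using is_schubert.step[OF assms(1-3)] len_down[OF assms(2,3,4)] by (simp add: stransp_tr)

lemma schubert_exists: "w permutes {1..n} \<Longrightarrow> \<exists>p. is_schubert n w p"
proof (induction "n * n - perm_length n w" arbitrary: w rule: less_induct)
  case less
  show ?case
  proof (cases "w = longest n")
    case True
    then show ?thesis using is_schubert.top by blast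
  next
    case False
    then obtain k where k: "1 \<le> k" "k < n" "\<not> w (Suc k) < w k"
      using no_ascent_longest[OF less.prems] by blast
    have "w k \<noteq> w (Suc k)" using perm_inj[OF less.prems] by fastforce
    with k have asc: "w k < w (Suc k)" by simp
    let ?v = "w \<circ> tr k"
    have lv: "perm_length n ?v = perm_length n w + 1" using len_up[OF k(1,2) asc] .
    have "perm_length n ?v \<le> n * n" by (rule perm_length_le)
    hence "n * n - perm_length n ?v < n * n - perm_length n w" using lv by simp
    then obtain p where p: "is_schubert n ?v p"
      using less.hyps[of ?v] permutes_tr[OF less.prems k(1,2)] by blast
    have eq: "?v \<circ> tr k = w" by (rule ext) simp
    have "is_schubert n (?v \<circ> tr k) (divdiff k p)"
      by (rule is_schubert_step'[OF p k(1,2)]) (use asc in simp)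
    thus ?thesis unfolding eq by blast
  qed
qed


lemma is_schubert_cases':
  assumes "is_schubert n v p"
  shows "(v = longest n \<and> p = staircase n) \<or>
         (\<exists>i p'. 1 \<le> i \<and> i < n \<and> is_schubert n (v \<circ> tr i) p' \<and> p = divdiff i p' \<and> v i < v (Suc i))"
  using assms
proof cases
  case top then show ?thesis by simp
next
  case (step w p' i)
  have wp: "w permutes {1..n}" using is_schubert_perm[OF step(3)] .
  have eq: "v \<circ> tr i = w" using step(1) unfolding stransp_tr by (auto intro!: ext)
  have "w (Suc i) < w i"
  proof (rule ccontr)
    assume "\<not> w (Suc i) < w i"
    moreover have "w i \<noteq> w (Suc i)" using perm_inj[OF wp] by fastforce
    ultimately have "w i < w (Suc i)" by simp
    from len_up[OF step(4,5) this] step(6) show False by (simp add: stransp_tr)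
  qed
  hence "v i < v (Suc i)" using step(1) by (simp add: stransp_tr)
  moreover have "is_schubert n (v \<circ> tr i) p'" unfolding eq by (rule step(3))
  ultimately show ?thesis using step(2,4,5) by blast
qed

lemma longest_desc: "1 \<le> i \<Longrightarrow> i < n \<Longrightarrow> longest n (Suc i) < longest n i"
  by (simp add: longest_def)

lemma comp_tr_commute: "j \<noteq> i \<Longrightarrow> j \<noteq> Suc i \<Longrightarrow> i \<noteq> Suc j \<Longrightarrow> v \<circ> tr i \<circ> tr j = v \<circ> tr j \<circ> tr i"
  by (rule ext) (simp add: tr_commute)

lemma comp_tr_braid: "v \<circ> tr i \<circ> tr (Suc i) \<circ> tr i = v \<circ> tr (Suc i) \<circ> tr i \<circ> tr (Suc i)"
  by (rule ext) (simp add: tr_braid)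

lemma comp_tr_cancel: "v \<circ> tr i \<circ> tr j \<circ> tr j = v \<circ> tr i"
  by (rule ext) simp

lemma comp_tr_cancel3: "v \<circ> tr i \<circ> tr j \<circ> tr k \<circ> tr k = v \<circ> tr i \<circ> tr j"
  by (rule ext) simp

theorem schubert_unique: "is_schubert n v p \<Longrightarrow> is_schubert n v q \<Longrightarrow> p = q"
proof (induction "n * n - perm_length n v" arbitrary: v p q rule: less_induct)
  case less
  have vp: "v permutes {1..n}" using is_schubert_perm[OF less.prems(1)] .
  have IH: "p = q" if "perm_length n u > perm_length n v" "is_schubert n u p" "is_schubert n u q" for u p q
  proof -
    have "perm_length n u \<le> n * n" by (rule perm_length_le)
    hence "n * n - perm_length n u < n * n - perm_length n v" using that(1) by linarith
    thus ?thesis using less.hyps that(2,3) by blast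
  qed
  have key: "divdiff i p' = divdiff j q'"
    if ij: "1 \<le> i" "i < j" "j < n" and sp: "is_schubert n (v \<circ> tr i) p'" and sq: "is_schubert n (v \<circ> tr j) q'"
      and ai: "v i < v (Suc i)" and aj: "v j < v (Suc j)" for i j p' q'
  proof -
    have j1: "1 \<le> j" using ij by simp
    have i1: "i < n" using ij by simp
    have lvi: "perm_length n (v \<circ> tr i) = perm_length n v + 1" by (rule len_up[OF ij(1) i1 ai])
    have lvj: "perm_length n (v \<circ> tr j) = perm_length n v + 1" by (rule len_up[OF j1 ij(3) aj])
    have vip: "v \<circ> tr i permutes {1..n}" by (rule permutes_tr[OF vp ij(1) i1])
    have vjp: "v \<circ> tr j permutes {1..n}" by (rule permutes_tr[OF vp j1 ij(3)])
    show ?thesis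
    proof (cases "j = Suc i")
      case False
      hence c: "j \<noteq> i" "j \<noteq> Suc i" "i \<noteq> Suc j" using ij by auto
      let ?u = "v \<circ> tr i \<circ> tr j"
      have a1: "(v \<circ> tr i) j < (v \<circ> tr i) (Suc j)" using aj c by simp
      have up: "?u permutes {1..n}" by (rule permutes_tr[OF vip j1 ij(3)])
      obtain r where r: "is_schubert n ?u r" using schubert_exists[OF up] by blast
      have "is_schubert n (?u \<circ> tr j) (divdiff j r)"
        by (rule is_schubert_step'[OF r j1 ij(3)]) (use aj c in simp)
      hence r1: "is_schubert n (v \<circ> tr i) (divdiff j r)" unfolding comp_tr_cancel .
      have p'eq: "p' = divdiff j r" by (rule IH[OF _ sp r1]) (simp add: lvi)
      have ueq: "?u = v \<circ> tr j \<circ> tr i" by (rule comp_tr_commute[OF c])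
      have "is_schubert n (v \<circ> tr j \<circ> tr i \<circ> tr i) (divdiff i r)"
        by (rule is_schubert_step'[OF r[unfolded ueq] ij(1) i1]) (use ai c in simp)
      hence r2: "is_schubert n (v \<circ> tr j) (divdiff i r)" unfolding comp_tr_cancel .
      have q'eq: "q' = divdiff i r" by (rule IH[OF _ sq r2]) (simp add: lvj)
      show ?thesis unfolding p'eq q'eq by (rule divdiff_commute[OF c])
    next
      case True
      hence jj: "j = Suc i" .
      have i2: "Suc (Suc i) \<le> n" using ij jj by simp
      let ?u = "v \<circ> tr i \<circ> tr (Suc i) \<circ> tr i"
      have x_p: "v \<circ> tr i \<circ> tr (Suc i) permutes {1..n}"
        by (rule permutes_tr[OF vip]) (use ij jj in auto)
      have up: "?u permutes {1..n}" by (rule permutes_tr[OF x_p ij(1) i1])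
      obtain r where r: "is_schubert n ?u r" using schubert_exists[OF up] by blast
      have "is_schubert n (?u \<circ> tr i) (divdiff i r)"
        by (rule is_schubert_step'[OF r ij(1) i1]) (use ai aj jj in simp)
      hence r1: "is_schubert n (v \<circ> tr i \<circ> tr (Suc i)) (divdiff i r)" unfolding comp_tr_cancel3 .
      have "is_schubert n (v \<circ> tr i \<circ> tr (Suc i) \<circ> tr (Suc i)) (divdiff (Suc i) (divdiff i r))"
        by (rule is_schubert_step'[OF r1]) (use ai aj jj ij in auto)
      hence r2: "is_schubert n (v \<circ> tr i) (divdiff (Suc i) (divdiff i r))" unfolding comp_tr_cancel .
      have p'eq: "p' = divdiff (Suc i) (divdiff i r)" by (rule IH[OF _ sp r2]) (simp add: lvi)
      have ueq: "?u = v \<circ> tr (Suc i) \<circ> tr i \<circ> tr (Suc i)" by (rule comp_tr_braid)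
      have "is_schubert n (v \<circ> tr (Suc i) \<circ> tr i \<circ> tr (Suc i) \<circ> tr (Suc i)) (divdiff (Suc i) r)"
        by (rule is_schubert_step'[OF r[unfolded ueq]]) (use ai aj jj ij in auto)
      hence r3: "is_schubert n (v \<circ> tr (Suc i) \<circ> tr i) (divdiff (Suc i) r)" unfolding comp_tr_cancel3 .
      have "is_schubert n (v \<circ> tr (Suc i) \<circ> tr i \<circ> tr i) (divdiff i (divdiff (Suc i) r))"
        by (rule is_schubert_step'[OF r3 ij(1) i1]) (use ai aj jj ij in auto)
      hence r4: "is_schubert n (v \<circ> tr (Suc i)) (divdiff i (divdiff (Suc i) r))" unfolding comp_tr_cancel .
      have q'eq: "q' = divdiff i (divdiff (Suc i) r)" by (rule IH[OF _ sq[unfolded jj] r4]) (simp add: lvj[unfolded jj])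
      show ?thesis unfolding p'eq q'eq jj by (rule divdiff_braid)
    qed
  qed
  from is_schubert_cases'[OF less.prems(1)] is_schubert_cases'[OF less.prems(2)]
  show "p = q"
  proof (elim disjE exE conjE)
    assume "v = longest n" "p = staircase n" "q = staircase n" thus "p = q" by simp
  next
    fix i p' assume "v = longest n" "1 \<le> i" "i < n" "v i < v (Suc i)"
    with longest_desc show "p = q" by fastforce
  next
    fix i p' assume "v = longest n" "1 \<le> i" "i < n" "v i < v (Suc i)"
    with longest_desc show "p = q" by fastforce
  next
    fix i p' j q'
    assume hi: "1 \<le> i" "i < n" "is_schubert n (v \<circ> tr i) p'" "p = divdiff i p'" "v i < v (Suc i)"
       and hj: "1 \<le> j" "j < n" "is_schubert n (v \<circ> tr j) q'" "q = divdiff j q'" "v j < v (Suc j)"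
    consider "i = j" | "i < j" | "j < i" by linarith
    thus "p = q"
    proof cases
      case 1
      have "p' = q'" by (rule IH[OF _ hi(3) hj(3)[folded 1]]) (simp add: len_up[OF hi(1,2,5)])
      thus ?thesis using hi hj 1 by simp
    next
      case 2 thus ?thesis using key[OF hi(1) 2 hj(2) hi(3) hj(3) hi(5) hj(5)] hi hj by simp
    next
      case 3 thus ?thesis using key[OF hj(1) 3 hi(2) hj(3) hi(3) hj(5) hi(5)] hi hj by simp
    qed
  qed
qed

lemma schubert_eq: "is_schubert n w p \<Longrightarrow> schubert n w = p"
  unfolding schubert_def by (rule the_equality) (auto intro: schubert_unique)

lemma schubert_is: "w permutes {1..n} \<Longrightarrow> is_schubert n w (schubert n w)"
  using schubert_exists schubert_eq by metis

lemma schubert_desc: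
  assumes "w permutes {1..n}" "1 \<le> i" "i < n" "w (Suc i) < w i"
  shows "divdiff i (schubert n w) = schubert n (w \<circ> tr i)"
  by (rule schubert_eq[symmetric], rule is_schubert_step'[OF schubert_is[OF assms(1)] assms(2,3,4)])

lemma schubert_asc:
  assumes "w permutes {1..n}" "1 \<le> i" "i < n" "w i < w (Suc i)"
  shows "schubert n w = divdiff i (schubert n (w \<circ> tr i))"
proof -
  have vp: "w \<circ> tr i permutes {1..n}" by (rule permutes_tr[OF assms(1-3)])
  have "is_schubert n (w \<circ> tr i \<circ> tr i) (divdiff i (schubert n (w \<circ> tr i)))"
    by (rule is_schubert_step'[OF schubert_is[OF vp] assms(2,3)]) (use assms(4) in simp)
  thus ?thesis unfolding comp_tr_tr by (rule schubert_eq)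
qed

lemma schubert_asc_sym:
  assumes "w permutes {1..n}" "1 \<le> i" "i < n" "w i < w (Suc i)"
  shows "swap_poly i (schubert n w) = schubert n w"
  using schubert_asc[OF assms] by simp


section \<open>Invariants: staircase support and homogeneity\<close>

lemma var_power: "var i ^ e = mon (Poly_Mapping.single i e)"
proof (induction e)
  case 0 then show ?case by simp
next
  case (Suc e)
  have "var i ^ Suc e = var i * mon (Poly_Mapping.single i e)" by (simp add: Suc)
  also have "\<dots> = mon (Poly_Mapping.single i (Suc e))"
    by (simp add: var_mult_mon single_add[symmetric])
  finally show ?case .
qed

lemma prod_mon: "(\<Prod>i\<in>S. mon (g i)) = mon (\<Sum>i\<in>S. g i)"
  by (induction S rule: infinite_finite_induct) (simp_all add: mult_single)

definition delta :: "nat \<Rightarrow> (nat \<Rightarrow>\<^sub>0 nat)" where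
  "delta n = (\<Sum>i\<in>{1..n}. Poly_Mapping.single i (n - i))"

lemma lookup_delta: "lk (delta n) t = (if t \<in> {1..n} then n - t else 0)"
  unfolding delta_def lookup_sum by (simp add: lookup_single when_def)

lemma staircase_delta: "staircase n = mon (delta n)"
  unfolding staircase_def delta_def by (simp add: var_power prod_mon)

definition stair :: "nat \<Rightarrow> (nat \<Rightarrow>\<^sub>0 nat) \<Rightarrow> bool" where
  "stair n m \<longleftrightarrow> (\<forall>t. lk m t \<le> n - t) \<and> lk m 0 = 0"

lemma stair_keys: "stair n m \<Longrightarrow> ks m \<subseteq> {1..<n}"
proof
  fix t assume s: "stair n m" and t: "t \<in> ks m"
  hence "lk m t > 0" by (simp add: in_keys_iff)
  moreover have "lk m t \<le> n - t" "lk m 0 = 0" using s by (auto simp: stair_def)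
  ultimately show "t \<in> {1..<n}" by (cases "t = 0") auto
qed

lemma deg_stair: "stair n m \<Longrightarrow> deg m = (\<Sum>t\<in>{1..n}. lk m t)"
  by (rule deg_superset) (use stair_keys[of n m] in auto)

lemma stair_delta: "stair n (delta n)"
  by (simp add: stair_def lookup_delta)

lemma deg_delta: "deg (delta n) = (\<Sum>i\<in>{1..n}. n - i)"
  using deg_stair[OF stair_delta] by (simp add: lookup_delta)

lemma length_longest: "perm_length n (longest n) = (\<Sum>i\<in>{1..n}. n - i)"
proof -
  have "invs n (longest n) = Sigma {1..n} (\<lambda>i. {i<..n})"
    by (auto simp: invs_def longest_def)
  hence "perm_length n (longest n) = (\<Sum>i\<in>{1..n}. card {i<..n})"
    by (simp add: perm_length_invs card_SigmaI)
  thus ?thesis by simp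
qed

lemma dstep_stair:
  assumes "stair n b" "1 \<le> i" "i < n" "dstep i b m"
  shows "stair n m \<and> deg m + 1 = deg b"
proof -
  obtain x y where m: "m = upd2 b i x y" and xy: "x + y + 1 = lk b i + lk b (Suc i)"
    "x < max (lk b i) (lk b (Suc i))" "y < max (lk b i) (lk b (Suc i))"
    using assms(4) by (auto simp: dstep_def)
  have bi: "lk b i \<le> n - i" "lk b (Suc i) \<le> n - Suc i" "lk b 0 = 0" "\<And>t. lk b t \<le> n - t"
    using assms(1) by (auto simp: stair_def)
  have x1: "x \<le> n - i" using xy(2) bi(1) bi(2) by (simp add: max_def split: if_splits)
  have y1: "y \<le> n - Suc i" using xy(3) bi(1) bi(2) by (simp add: max_def split: if_splits)
  have sm: "stair n m"
    unfolding stair_def m lookup_upd2 using bi(3,4) x1 y1 assms(2,3) by auto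
  have R: "{1..n} = insert i (insert (Suc i) ({1..n} - {i, Suc i}))" using assms(2,3) by auto
  have fin: "finite ({1..n} - {i, Suc i})" by simp
  have same: "(\<Sum>t\<in>{1..n} - {i, Suc i}. lk m t) = (\<Sum>t\<in>{1..n} - {i, Suc i}. lk b t)"
    by (rule sum.cong) (auto simp: m lookup_upd2)
  have "deg m = lk m i + (lk m (Suc i) + (\<Sum>t\<in>{1..n} - {i, Suc i}. lk m t))"
    using deg_stair[OF sm] by (subst (asm) R) (simp add: fin)
  moreover have "deg b = lk b i + (lk b (Suc i) + (\<Sum>t\<in>{1..n} - {i, Suc i}. lk b t))"
    using deg_stair[OF assms(1)] by (subst (asm) R) (simp add: fin)
  ultimately have "deg m + 1 = deg b" using xy(1) same by (simp add: m lookup_upd2)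
  with sm show ?thesis by simp
qed

lemma schubert_inv:
  assumes "is_schubert n w p"
  shows "\<forall>m\<in>ks p. stair n m \<and> deg m = perm_length n w"
  using assms
proof (induction rule: is_schubert.induct)
  case top
  show ?case by (simp add: staircase_delta stair_delta deg_delta length_longest)
next
  case (step w p i)
  show ?case
  proof
    fix m assume "m \<in> ks (divdiff i p)"
    then obtain b where b: "b \<in> ks p" "dstep i b m" using keys_divdiff by blast
    with step.IH have "stair n b" "deg b = perm_length n w" by auto
    from dstep_stair[OF this(1) step.hyps(2,3) b(2)] this(2) step.hyps(4)
    show "stair n m \<and> deg m = perm_length n (w \<circ> stransp i)" by simp
  qed
qed

lemma schubert_inv':
  "w permutes {1..n} \<Longrightarrow> m \<in> ks (schubert n w) \<Longrightarrow> stair n m \<and> deg m = perm_length n w"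
  using schubert_inv[OF schubert_is] by blast

lemma schubert_const:
  assumes "w permutes {1..n}" "perm_length n w \<noteq> 0"
  shows "lk (schubert n w) 0 = 0"
proof (rule ccontr)
  assume "lk (schubert n w) 0 \<noteq> 0"
  hence "0 \<in> ks (schubert n w)" by (simp add: in_keys_iff)
  from schubert_inv'[OF assms(1) this] assms(2) show False by simp
qed


section \<open>The Schubert polynomial of the identity\<close>

definition pi :: "nat \<Rightarrow> nat \<Rightarrow> nat \<Rightarrow> nat" where
  "pi m t x = (if 1 \<le> x \<and> x \<le> t then m - x else if x = Suc t then m
     else if Suc (Suc t) \<le> x \<and> x \<le> m then Suc m - x else x)"

definition mu :: "nat \<Rightarrow> nat \<Rightarrow> (nat \<Rightarrow>\<^sub>0 nat)" where
  "mu m t = (\<Sum>x\<in>{1..m}. Poly_Mapping.single x (if x \<le> t then m - x - 1 else m - x))"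

lemma lookup_mu: "lk (mu m t) x = (if x \<in> {1..m} then (if x \<le> t then m - x - 1 else m - x) else 0)"
  unfolding mu_def lookup_sum by (simp add: lookup_single when_def)

lemma pi_top: "1 \<le> n \<Longrightarrow> pi n 0 = longest n"
  by (rule ext) (auto simp: pi_def longest_def)

lemma mu_top: "mu n 0 = delta n"
  by (rule poly_mapping_eqI) (simp add: lookup_mu lookup_delta)

lemma pi_step: "Suc t < m \<Longrightarrow> pi m t \<circ> tr (Suc t) = pi m (Suc t)"
proof (rule ext)
  fix x assume "Suc t < m"
  thus "(pi m t \<circ> tr (Suc t)) x = pi m (Suc t) x"
    by (cases "x = Suc t"; cases "x = Suc (Suc t)") (auto simp: pi_def)
qed

lemma pi_desc: "Suc t < m \<Longrightarrow> pi m t (Suc (Suc t)) < pi m t (Suc t)"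
  by (simp add: pi_def)

lemma divdiff_mon_step:
  assumes "lk b k = Suc (lk b (Suc k))"
  shows "divdiff k (mon b) = mon (upd2 b k (lk b (Suc k)) (lk b (Suc k)))"
proof -
  have "divdiff k (mon b) = dmon k b" by (simp add: divdiff_dd dd_def)
  also have "\<dots> = mon (upd2 b k (lk b (Suc k)) (lk b (Suc k)))"
    using assms by (simp add: dmon_def)
  finally show ?thesis .
qed

lemma mu_step: "Suc t < m \<Longrightarrow> divdiff (Suc t) (mon (mu m t)) = mon (mu m (Suc t))"
proof -
  assume a: "Suc t < m"
  have "lk (mu m t) (Suc t) = Suc (lk (mu m t) (Suc (Suc t)))" using a by (simp add: lookup_mu)
  hence "divdiff (Suc t) (mon (mu m t)) = mon (upd2 (mu m t) (Suc t) (lk (mu m t) (Suc (Suc t))) (lk (mu m t) (Suc (Suc t))))"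
    by (rule divdiff_mon_step)
  also have "upd2 (mu m t) (Suc t) (lk (mu m t) (Suc (Suc t))) (lk (mu m t) (Suc (Suc t))) = mu m (Suc t)"
    by (rule poly_mapping_eqI) (use a in \<open>auto simp: lookup_upd2 lookup_mu\<close>)
  finally show ?thesis .
qed

lemma pi_next: "2 \<le> m \<Longrightarrow> pi m (m - 1) = pi (m - 1) 0"
  by (rule ext) (auto simp: pi_def)

lemma mu_next: "2 \<le> m \<Longrightarrow> mu m (m - 1) = mu (m - 1) 0"
  by (rule poly_mapping_eqI) (auto simp: lookup_mu)

lemma pi_one: "pi 1 0 = id"
  by (rule ext) (auto simp: pi_def)

lemma mu_one: "mu 1 0 = 0"
  by (rule poly_mapping_eqI) (auto simp: lookup_mu)

lemma chain_row:
  assumes "m \<le> n" "is_schubert n (pi m 0) (mon (mu m 0))" "t < m"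
  shows "is_schubert n (pi m t) (mon (mu m t))"
  using assms(3)
proof (induction t)
  case 0 then show ?case using assms(2) by simp
next
  case (Suc t)
  have "is_schubert n (pi m t \<circ> tr (Suc t)) (divdiff (Suc t) (mon (mu m t)))"
    by (rule is_schubert_step'[OF Suc.IH]) (use Suc.prems assms(1) pi_desc in auto)
  thus ?case unfolding pi_step[OF Suc.prems] mu_step[OF Suc.prems] .
qed

lemma chain_all:
  assumes "1 \<le> n" "k < n"
  shows "is_schubert n (pi (n - k) 0) (mon (mu (n - k) 0))"
  using assms(2)
proof (induction k)
  case 0
  show ?case unfolding diff_zero pi_top[OF assms(1)] mu_top staircase_delta[symmetric] by (rule is_schubert.top)
next
  case (Suc k)
  have m2: "2 \<le> n - k" using Suc.prems by simp
  have ih: "is_schubert n (pi (n - k) 0) (mon (mu (n - k) 0))"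
    using Suc.IH Suc.prems by simp
  have le1: "n - k \<le> n" by simp
  have le2: "n - k - 1 < n - k" using m2 by simp
  have "is_schubert n (pi (n - k) (n - k - 1)) (mon (mu (n - k) (n - k - 1)))"
    by (rule chain_row[OF le1 ih le2])
  hence h: "is_schubert n (pi (n - k - 1) 0) (mon (mu (n - k - 1) 0))"
    unfolding pi_next[OF m2] mu_next[OF m2] .
  have eq: "n - Suc k = n - k - 1" by simp
  show ?case unfolding eq by (rule h)
qed

lemma schubert_id: "1 \<le> n \<Longrightarrow> schubert n id = 1"
proof -
  assume n: "1 \<le> n"
  have "is_schubert n (pi (n - (n - 1)) 0) (mon (mu (n - (n - 1)) 0))"
    by (rule chain_all) (use n in auto)
  moreover have "n - (n - 1) = 1" using n by simp
  ultimately have "is_schubert n (pi 1 0) (mon (mu 1 0))" by simp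
  hence "is_schubert n id 1" unfolding pi_one mu_one by simp
  thus ?thesis by (rule schubert_eq)
qed


section \<open>Pattern avoidance and codes\<close>

definition avoid :: "nat \<Rightarrow> (nat \<Rightarrow> nat) \<Rightarrow> bool" where
  "avoid n w \<longleftrightarrow> (\<forall>p q r. 1 \<le> p \<and> p < q \<and> q < r \<and> r \<le> n \<longrightarrow> \<not> (w r < w p \<and> w r < w q))"

definition code :: "nat \<Rightarrow> (nat \<Rightarrow> nat) \<Rightarrow> nat \<Rightarrow> nat" where
  "code n w i = card {j. i < j \<and> j \<le> n \<and> w j < w i}"

definition fixes1 :: "nat \<Rightarrow> (nat \<Rightarrow> nat) \<Rightarrow> bool" where
  "fixes1 k w \<longleftrightarrow> (\<forall>i. 1 \<le> i \<and> i < k \<longrightarrow> w i = i)"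

lemma avoidD: "avoid n w \<Longrightarrow> 1 \<le> p \<Longrightarrow> p < q \<Longrightarrow> q < r \<Longrightarrow> r \<le> n \<Longrightarrow> w r < w p \<Longrightarrow> w r < w q \<Longrightarrow> False"
  unfolding avoid_def by blast

lemma all_less_3: "(\<forall>a<(3::nat). P a) \<longleftrightarrow> P 0 \<and> P 1 \<and> P 2"
proof
  assume "\<forall>a<3. P a" thus "P 0 \<and> P 1 \<and> P 2" by simp
next
  assume h: "P 0 \<and> P 1 \<and> P 2"
  show "\<forall>a<3. P a"
  proof (intro allI impI)
    fix a :: nat assume "a < 3" hence "a = 0 \<or> a = 1 \<or> a = 2" by auto
    thus "P a" using h by auto
  qed
qed

lemma pattern_iff:
  assumes wp: "w permutes {1..n}"
  shows "(\<not> contains_pattern n w [3,2,1] \<and> \<not> contains_pattern n w [2,3,1]) \<longleftrightarrow> avoid n w"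
proof
  assume h: "\<not> contains_pattern n w [3,2,1] \<and> \<not> contains_pattern n w [2,3,1]"
  show "avoid n w" unfolding avoid_def
  proof (intro allI impI notI)
    fix p q r assume pqr: "1 \<le> p \<and> p < q \<and> q < r \<and> r \<le> n" and v: "w r < w p \<and> w r < w q"
    have "w p \<noteq> w q" using perm_inj[OF wp, of p q] pqr by auto
    define idx where "idx = (\<lambda>a::nat. if a = 0 then p else if a = 1 then q else r)"
    have mono: "\<forall>a b. a < b \<and> b < 3 \<longrightarrow> idx a < idx b"
      using pqr by (auto simp: idx_def numeral_3_eq_3 less_Suc_eq)
    have rng: "\<forall>a<3. idx a \<in> {1..n}" using pqr by (auto simp: idx_def all_less_3)
    show False
    proof (cases "w q < w p")
      case True
      have "contains_pattern n w [3,2,1]" unfolding contains_pattern_def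
        by (rule exI[of _ idx]) (use mono rng True v in \<open>auto simp: all_less_3 idx_def\<close>)
      with h show False by simp
    next
      case False
      with \<open>w p \<noteq> w q\<close> have "w p < w q" by simp
      have "contains_pattern n w [2,3,1]" unfolding contains_pattern_def
        by (rule exI[of _ idx]) (use mono rng \<open>w p < w q\<close> v in \<open>auto simp: all_less_3 idx_def\<close>)
      with h show False by simp
    qed
  qed
next
  assume a: "avoid n w"
  have no: False if "contains_pattern n w l" "l ! 2 < l ! 0" "l ! 2 < l ! 1" "length l = 3" for l
  proof -
    from that(1) obtain idx where i: "\<forall>a b. a < b \<and> b < length l \<longrightarrow> idx a < idx b"
      "\<forall>a < length l. idx a \<in> {1..n}"
      "\<forall>a < length l. \<forall>b < length l. (w (idx a) < w (idx b) \<longleftrightarrow> l ! a < l ! b)"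
      unfolding contains_pattern_def by blast
    have "idx 0 < idx 1" "idx 1 < idx 2" "1 \<le> idx 0" "idx 2 \<le> n" using i that(4) by auto
    moreover have "w (idx 2) < w (idx 0)" "w (idx 2) < w (idx 1)" using i(3) that(2,3,4) by auto
    ultimately show False using a unfolding avoid_def by blast
  qed
  show "\<not> contains_pattern n w [3,2,1] \<and> \<not> contains_pattern n w [2,3,1]"
    using no[of "[3,2,1]"] no[of "[2,3,1]"] by auto
qed

lemma fin_code_set: "finite {j::nat. i < j \<and> j \<le> n \<and> P j}"
  by (rule finite_subset[of _ "{..n}"]) auto

lemma code_zero_iff: "code n w i = 0 \<longleftrightarrow> (\<forall>j. i < j \<and> j \<le> n \<longrightarrow> \<not> w j < w i)"
  unfolding code_def using fin_code_set[of i n "\<lambda>j. w j < w i"] by auto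

lemma avoid_asc_code:
  assumes "avoid n w" "1 \<le> k" "k < n" "w k < w (Suc k)"
  shows "code n w k = 0"
  unfolding code_zero_iff
proof (intro allI impI notI)
  fix j assume j: "k < j \<and> j \<le> n" and v: "w j < w k"
  have "j \<noteq> Suc k" using v assms(4) by auto
  hence "Suc k < j" using j by simp
  thus False using assms(1,2) j v assms(4) unfolding avoid_def
    by (meson less_trans Suc_le_eq order.strict_trans2 lessI)
qed

lemma avoid_desc_code:
  assumes "avoid n w" "1 \<le> k" "k < n" "w (Suc k) < w k"
  shows "code n w (Suc k) = 0"
  unfolding code_zero_iff
proof (intro allI impI notI)
  fix j assume j: "Suc k < j \<and> j \<le> n" and v: "w j < w (Suc k)"
  have "1 \<le> k \<and> k < Suc k \<and> Suc k < j \<and> j \<le> n" using assms j by simp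
  moreover have "w j < w k \<and> w j < w (Suc k)" using v assms(4) by simp
  ultimately show False using assms(1) unfolding avoid_def by blast
qed

lemma code_ge_n: "n \<le> i \<Longrightarrow> code n w i = 0"
  unfolding code_zero_iff by auto

lemma code_desc_pos:
  assumes "1 \<le> k" "k < n" "w (Suc k) < w k"
  shows "code n w k \<ge> 1"
proof -
  have "Suc k \<in> {j. k < j \<and> j \<le> n \<and> w j < w k}" using assms by simp
  hence "{j. k < j \<and> j \<le> n \<and> w j < w k} \<noteq> {}" by blast
  thus ?thesis unfolding code_def using fin_code_set[of k n "\<lambda>j. w j < w k"]
    by (simp add: Suc_le_eq card_gt_0_iff)
qed

lemma code_swap:
  assumes "1 \<le> k" "k < n" "w (Suc k) < w k"
  shows "code n (w \<circ> tr k) i =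
    (if i = k then code n w (Suc k) else if i = Suc k then code n w k - 1 else code n w i)"
proof -
  let ?S = "\<lambda>v i. {j. i < j \<and> j \<le> n \<and> v j < v i}"
  consider "i = k" | "i = Suc k" | "i < k" | "Suc k < i" by linarith
  thus ?thesis
  proof cases
    case 1
    have "?S (w \<circ> tr k) i = ?S w (Suc k)"
    proof (rule set_eqI, rule iffI)
      fix j assume "j \<in> ?S (w \<circ> tr k) i"
      thus "j \<in> ?S w (Suc k)" using 1 assms(3)
        by (cases "j = Suc k") (auto simp: transpose_def split: if_splits)
    next
      fix j assume "j \<in> ?S w (Suc k)"
      thus "j \<in> ?S (w \<circ> tr k) i" using 1 by (auto simp: transpose_def)
    qed
    thus ?thesis using 1 by (simp add: code_def)
  next
    case 2
    have "?S (w \<circ> tr k) i = ?S w k - {Suc k}"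
      using 2 by (auto simp: transpose_def)
    moreover have "Suc k \<in> ?S w k" using assms by simp
    ultimately show ?thesis using 2 fin_code_set[of k n "\<lambda>j. w j < w k"]
      by (simp add: code_def card_Diff_singleton)
  next
    case 3
    have "?S (w \<circ> tr k) i = tr k ` ?S w i"
    proof (rule set_eqI, rule iffI)
      fix j assume j: "j \<in> ?S (w \<circ> tr k) i"
      have "tr k j \<in> ?S w i" using j 3 assms(2)
        by (cases "j = k"; cases "j = Suc k") (auto simp: transpose_def)
      hence "tr k (tr k j) \<in> tr k ` ?S w i" by blast
      thus "j \<in> tr k ` ?S w i" by simp
    next
      fix j assume "j \<in> tr k ` ?S w i"
      then obtain j' where j': "j' \<in> ?S w i" "j = tr k j'" by blast
      thus "j \<in> ?S (w \<circ> tr k) i" using 3 assms(2)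
        by (cases "j' = k"; cases "j' = Suc k") (auto simp: transpose_def)
    qed
    moreover have "card (tr k ` ?S w i) = card (?S w i)"
      by (rule card_image) (rule inj_on_subset[OF inj_tr subset_UNIV])
    ultimately show ?thesis using 3 by (simp add: code_def)
  next
    case 4
    have "?S (w \<circ> tr k) i = ?S w i" using 4 by (auto simp: transpose_def)
    thus ?thesis using 4 by (simp add: code_def)
  qed
qed

lemma avoid_down:
  assumes wp: "w permutes {1..n}" and a: "avoid n w" and k: "1 \<le> k" "k < n" and d: "w (Suc k) < w k"
  shows "avoid n (w \<circ> tr k)"
  unfolding avoid_def
proof (intro allI impI notI)
  fix p q r
  assume pqr: "1 \<le> p \<and> p < q \<and> q < r \<and> r \<le> n" and v: "(w \<circ> tr k) r < (w \<circ> tr k) p \<and> (w \<circ> tr k) r < (w \<circ> tr k) q"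
  have pr: "(p, r) \<noteq> (k, Suc k)"
  proof
    assume "(p, r) = (k, Suc k)"
    hence "(w \<circ> tr k) r = w k" "(w \<circ> tr k) p = w (Suc k)" by auto
    with v d show False by simp
  qed
  have qr: "(q, r) \<noteq> (k, Suc k)"
  proof
    assume "(q, r) = (k, Suc k)"
    hence "(w \<circ> tr k) r = w k" "(w \<circ> tr k) q = w (Suc k)" by auto
    with v d show False by simp
  qed
  have o1: "tr k p < tr k r" using tr_order[OF _ pr] pqr by simp
  have o2: "tr k q < tr k r" using tr_order[OF _ qr] pqr by simp
  have ne: "tr k p \<noteq> tr k q" using pqr by (metis less_irrefl tr_tr)
  have r1: "tr k p \<in> {1..n}" "tr k q \<in> {1..n}" "tr k r \<in> {1..n}"
    using tr_range[OF k(1) Suc_leI[OF k(2)]] pqr by auto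
  have vv: "w (tr k r) < w (tr k p)" "w (tr k r) < w (tr k q)" using v by auto
  show False
  proof (cases "tr k p < tr k q")
    case True
    show False by (rule avoidD[OF a _ True o2 _ vv]) (use r1 in auto)
  next
    case False
    hence lt: "tr k q < tr k p" using ne by simp
    show False by (rule avoidD[OF a _ lt o1 _ vv(2) vv(1)]) (use r1 in auto)
  qed
qed

lemma fixes_below:
  assumes wp: "w permutes {1..n}" and f: "fixes1 k w" and x: "k \<le> x" "x \<in> {1..n}"
  shows "k \<le> w x"
proof (rule ccontr)
  assume "\<not> k \<le> w x"
  hence lt: "w x < k" by simp
  have "w x \<in> {1..n}" using permutes_in_image[OF wp] x(2) by simp
  hence "w (w x) = w x" using f lt unfolding fixes1_def by auto
  hence "w x = x" using perm_inj[OF wp] by blast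
  with lt x(1) show False by simp
qed

lemma avoidI: "(\<And>p q r. 1 \<le> p \<Longrightarrow> p < q \<Longrightarrow> q < r \<Longrightarrow> r \<le> n \<Longrightarrow> w r < w p \<Longrightarrow> w r < w q \<Longrightarrow> False) \<Longrightarrow> avoid n w"
  unfolding avoid_def by blast

lemma avoid_up:
  assumes wp: "w permutes {1..n}" and k: "1 \<le> k" "k < n" and d: "w (Suc k) < w k"
    and a: "avoid n (w \<circ> tr k)" and f: "fixes1 k (w \<circ> tr k)"
  shows "avoid n w"
proof (rule avoidI)
  let ?v = "w \<circ> tr k"
  have vp: "?v permutes {1..n}" by (rule permutes_tr[OF wp k])
  have vge: "k \<le> ?v x" if "k \<le> x" "x \<in> {1..n}" for x by (rule fixes_below[OF vp f that])
  have vfix: "?v x = x" if "1 \<le> x" "x < k" for x using f that unfolding fixes1_def by blast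
  have wlow: "w x = x" if "1 \<le> x" "x < k" for x using vfix[OF that] that by simp
  have s1: "Suc k \<in> {1..n}" "k \<in> {1..n}" using k by auto
  have g1: "k \<le> w k" using vge[OF _ s1(1)] by simp
  have g2: "k \<le> w (Suc k)" using vge[OF _ s1(2)] by simp
  fix p q r
  assume p1: "1 \<le> p" and pq: "p < q" and qr: "q < r" and rn: "r \<le> n"
    and v1: "w r < w p" and v2: "w r < w q"
  consider "r < k" | "r = k" | "r = Suc k" | "Suc k < r" by linarith
  thus False
  proof cases
    case 1
    have e1: "w r = r" using wlow[of r] p1 pq qr 1 by linarith
    have e2: "w p = p" using wlow[of p] p1 pq qr 1 by linarith
    show False using v1 pq qr e1 e2 by linarith
  next
    case 2
    have e2: "w p = p" using wlow[of p] p1 pq qr 2 by linarith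
    show False using v1 pq qr 2 g1 e2 by simp
  next
    case 3
    have e2: "w p = p" using wlow[of p] p1 pq qr 3 by linarith
    show False using v1 pq qr 3 g2 e2 by simp
  next
    case 4
    have rr: "tr k r = r" using 4 by (simp add: transpose_def)
    have o1: "tr k p < r" "tr k q < r" using 4 pq qr by (auto simp: transpose_def)
    have ne: "tr k p \<noteq> tr k q" using pq by (metis less_irrefl tr_tr)
    have ge: "1 \<le> tr k p" "1 \<le> tr k q" using p1 pq k by (auto simp: transpose_def)
    have vv: "?v r < ?v (tr k p)" "?v r < ?v (tr k q)" using v1 v2 rr by simp_all
    show False
    proof (cases "tr k p < tr k q")
      case True
      show False by (rule avoidD[OF a ge(1) True o1(2) rn vv])
    next
      case False
      hence lt: "tr k q < tr k p" using ne by simp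
      show False by (rule avoidD[OF a ge(2) lt o1(1) rn vv(2) vv(1)])
    qed
  qed
qed

lemma no_descent_id:
  assumes w: "w permutes {1..n}" and inc: "\<And>k. 1 \<le> k \<Longrightarrow> k < n \<Longrightarrow> w k < w (Suc k)"
  shows "w = id"
proof (rule ext)
  fix i
  have chain: "w i + d \<le> w (i + d)" if "1 \<le> i" "i + d \<le> n" for i d
    using that
  proof (induction d)
    case 0 then show ?case by simp
  next
    case (Suc d)
    have "w (i + d) < w (Suc (i + d))" using inc[of "i + d"] Suc.prems by simp
    with Suc show ?case by simp
  qed
  have rng: "w j \<in> {1..n}" if "j \<in> {1..n}" for j
    using permutes_in_image[OF w] that by simp
  show "w i = id i"
  proof (cases "i \<in> {1..n}")
    case True
    have "w i + (n - i) \<le> w n" using chain[of i "n - i"] True by simp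
    moreover have "w n \<le> n" using rng[of n] True by auto
    moreover have "w 1 + (i - 1) \<le> w i" using chain[of 1 "i - 1"] True by simp
    moreover have "w 1 \<ge> 1" using rng[of 1] True by auto
    ultimately show ?thesis using True by simp
  next
    case False
    then show ?thesis using permutes_not_in[OF w] by simp
  qed
qed


section \<open>Products of complete homogeneous polynomials\<close>

definition Q :: "nat \<Rightarrow> (nat \<Rightarrow> nat) \<Rightarrow> mpoly" where
  "Q n c = (\<Prod>i\<in>{1..<n}. hcomp i (c i))"

lemma chm_Q: "chm (map c [1..<n]) = Q n c"
proof -
  have "chm (map c [1..<n]) = (\<Prod>k<n - 1. hcomp (Suc k) (c (Suc k)))"
    unfolding chm_def by (rule prod.cong) (auto simp: nth_upt)
  also have "\<dots> = (\<Prod>i\<in>Suc ` {..<n - 1}. hcomp i (c i))"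
    by (subst prod.reindex) auto
  also have "Suc ` {..<n - 1} = {1..<n}"
  proof
    show "Suc ` {..<n - 1} \<subseteq> {1..<n}" by auto
    show "{1..<n} \<subseteq> Suc ` {..<n - 1}"
    proof
      fix x assume "x \<in> {1..<n}"
      hence "x - 1 \<in> {..<n - 1}" "x = Suc (x - 1)" by auto
      thus "x \<in> Suc ` {..<n - 1}" by blast
    qed
  qed
  finally show ?thesis unfolding Q_def .
qed

lemma Q_sym:
  assumes "1 \<le> k" "c k = 0"
  shows "swap_poly k (Q n c) = Q n c"
  unfolding Q_def swap_poly_prod
proof (rule prod.cong[OF refl])
  fix x assume "x \<in> {1..<n}"
  show "swap_poly k (hcomp x (c x)) = hcomp x (c x)"
  proof (cases "x = k")
    case True thus ?thesis using assms by simp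
  next
    case False thus ?thesis using assms(1) by (simp add: hcomp_sym)
  qed
qed

lemma Q_desc:
  assumes k: "1 \<le> k" "k < n" and ck: "c k \<ge> 1" and c1: "Suc k < n \<Longrightarrow> c (Suc k) = 0"
    and c2: "Suc k = n \<Longrightarrow> c k = 1"
  shows "divdiff k (Q n c) = Q n (\<lambda>i. if i = k then 0 else if i = Suc k then c k - 1 else c i)"
proof -
  let ?c' = "\<lambda>i. if i = k then 0 else if i = Suc k then c k - 1 else c i"
  let ?A = "{1..<n} - {k}"
  let ?R = "\<Prod>i\<in>?A. hcomp i (c i)"
  have kin: "k \<in> {1..<n}" using k by simp
  have Qc: "Q n c = hcomp k (c k) * ?R" unfolding Q_def by (rule prod.remove[OF _ kin]) simp
  have Qc': "Q n ?c' = hcomp k 0 * (\<Prod>i\<in>?A. hcomp i (?c' i))"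
    unfolding Q_def by (subst prod.remove[OF _ kin]) simp_all
  have Rs: "swap_poly k ?R = ?R"
    unfolding swap_poly_prod by (rule prod.cong[OF refl]) (use k in \<open>auto intro: hcomp_sym\<close>)
  have "divdiff k (Q n c) = divdiff k (hcomp k (c k)) * ?R"
    unfolding Qc by (rule divdiff_mult_sym2[OF Rs])
  also have "\<dots> = hcomp (Suc k) (c k - 1) * ?R" using hcomp_divdiff[OF k(1) ck] by simp
  also have "\<dots> = (\<Prod>i\<in>?A. hcomp i (?c' i))"
  proof (cases "Suc k < n")
    case True
    have sin: "Suc k \<in> ?A" using True k by simp
    have "?R = hcomp (Suc k) (c (Suc k)) * (\<Prod>i\<in>?A - {Suc k}. hcomp i (c i))"
      by (rule prod.remove[OF _ sin]) simp
    moreover have "(\<Prod>i\<in>?A. hcomp i (?c' i)) = hcomp (Suc k) (c k - 1) * (\<Prod>i\<in>?A - {Suc k}. hcomp i (?c' i))"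
      by (subst prod.remove[OF _ sin]) simp_all
    moreover have "(\<Prod>i\<in>?A - {Suc k}. hcomp i (?c' i)) = (\<Prod>i\<in>?A - {Suc k}. hcomp i (c i))"
      by (rule prod.cong) auto
    ultimately show ?thesis using c1[OF True] by simp
  next
    case False
    hence sk: "Suc k = n" using k by simp
    have "(\<Prod>i\<in>?A. hcomp i (?c' i)) = ?R" by (rule prod.cong) (use sk in auto)
    thus ?thesis using c2[OF sk] by simp
  qed
  finally show ?thesis using Qc' by simp
qed

lemma keys_prod_subset:
  assumes "\<And>i m. i \<in> A \<Longrightarrow> m \<in> ks (f i) \<Longrightarrow> ks m \<subseteq> B"
  shows "m \<in> ks (prod f A) \<Longrightarrow> ks m \<subseteq> (B :: nat set)"
  using assms
proof (induction A arbitrary: m rule: infinite_finite_induct)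
  case (infinite A) thus ?case by simp
next
  case empty thus ?case by simp
next
  case (insert x F)
  have "m \<in> ks (f x * prod f F)" using insert by simp
  then obtain a b where ab: "m = a + b" "a \<in> ks (f x)" "b \<in> ks (prod f F)"
    using keys_mult by blast
  have "ks a \<subseteq> B" using insert.prems(2) ab(2) by blast
  moreover have "ks b \<subseteq> B" using insert.IH[OF ab(3)] insert.prems(2) by blast
  ultimately show ?case using ab(1) keys_add[of a b] by blast
qed

lemma keys_Q: assumes "m \<in> ks (Q n c)" shows "ks m \<subseteq> {1..<n}"
proof (rule keys_prod_subset[OF _ assms[unfolded Q_def]])
  fix i m assume i: "i \<in> {1..<n}" and m: "m \<in> ks (hcomp i (c i))"
  have "ks m \<subseteq> {1..i}" using keys_hcomp[OF m] by blast
  thus "ks m \<subseteq> {1..<n}" using i by auto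
qed

lemma Q_const: "i \<in> {1..<n} \<Longrightarrow> c i \<ge> 1 \<Longrightarrow> lk (Q n c) 0 = 0"
proof -
  assume i: "i \<in> {1..<n}" "c i \<ge> 1"
  have "lk (Q n c) 0 = (\<Prod>i\<in>{1..<n}. lk (hcomp i (c i)) 0)"
    unfolding evalp_const[symmetric] Q_def evalp_prod ..
  also have "\<dots> = 0" using i by (subst prod_zero_iff) (auto simp: hcomp_const intro!: bexI[of _ i])
  finally show ?thesis .
qed

lemma sym_const:
  assumes n: "1 \<le> n" and sym: "\<And>k. 1 \<le> k \<Longrightarrow> k < n \<Longrightarrow> swap_poly k f = f"
    and ks: "\<And>m. m \<in> ks f \<Longrightarrow> ks m \<subseteq> {1..<n}"
  shows "ks f \<subseteq> {0}"
proof -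
  have P: "\<forall>m\<in>ks f. ks m \<subseteq> {1..<n - d}" if "d \<le> n - 1" for d
    using that
  proof (induction d)
    case 0 then show ?case using ks by simp
  next
    case (Suc d)
    let ?t = "n - Suc d"
    have t1: "1 \<le> ?t" "?t < n" using Suc.prems n by auto
    have eq: "n - d = Suc ?t" using Suc.prems n by simp
    show ?case
    proof
      fix m assume m: "m \<in> ks f"
      have sub: "ks m \<subseteq> {1..<Suc ?t}" using Suc.IH Suc.prems m eq by simp
      have tn: "?t \<notin> ks m"
      proof
        assume tin: "?t \<in> ks m"
        have "lk f (swap_mon ?t m) = lk (swap_poly ?t f) m" by simp
        also have "\<dots> = lk f m" using sym[OF t1] by simp
        finally have "swap_mon ?t m \<in> ks f" using m by (simp add: in_keys_iff)
        hence "ks (swap_mon ?t m) \<subseteq> {1..<Suc ?t}" using Suc.IH Suc.prems eq by simp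
        moreover have "Suc ?t \<in> ks (swap_mon ?t m)" using tin by (simp add: in_keys_iff)
        ultimately show False by auto
      qed
      show "ks m \<subseteq> {1..<n - Suc d}"
      proof
        fix x assume x: "x \<in> ks m"
        hence "x \<in> {1..<Suc ?t}" using sub by blast
        moreover have "x \<noteq> ?t" using x tn by blast
        ultimately show "x \<in> {1..<n - Suc d}" by simp
      qed
    qed
  qed
  have "\<forall>m\<in>ks f. ks m \<subseteq> {1..<1}" using P[of "n - 1"] n by simp
  hence "\<forall>m\<in>ks f. m = 0" by (simp add: keys_eq_empty[symmetric] del: keys_eq_empty)
  thus ?thesis by auto
qed


section \<open>Avoiding permutations: the Schubert polynomial is a CHM\<close>

lemma code_id: "code n id i = 0"
  unfolding code_zero_iff by simp

lemma Q_zero: "Q n (\<lambda>_. 0) = 1"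
  by (simp add: Q_def)

lemma exists_descent:
  assumes wp: "w permutes {1..n}" and ne: "w \<noteq> id"
  obtains k where "1 \<le> k" "k < n" "w (Suc k) < w k"
proof -
  have "\<exists>k. 1 \<le> k \<and> k < n \<and> \<not> w k < w (Suc k)"
    using no_descent_id[OF wp] ne by blast
  then obtain k where k: "1 \<le> k" "k < n" "\<not> w k < w (Suc k)" by blast
  have "w k \<noteq> w (Suc k)" using perm_inj[OF wp] by fastforce
  with k have "w (Suc k) < w k" by simp
  with k that show ?thesis by blast
qed

theorem avoid_schubert:
  assumes n: "1 \<le> n" and wp: "w permutes {1..n}" and a: "avoid n w"
  shows "schubert n w = Q n (code n w)"
  using wp a
proof (induction "perm_length n w" arbitrary: w rule: less_induct)
  case less
  note wp = less.prems(1) and a = less.prems(2)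
  show ?case
  proof (cases "w = id")
    case True
    have "code n id = (\<lambda>_. 0)" by (rule ext) (rule code_id)
    thus ?thesis using schubert_id[OF n] True by (simp add: Q_zero)
  next
    case False
    let ?c = "code n w"
    let ?S = "schubert n w"
    let ?D = "?S - Q n ?c"
    have dk: "divdiff k ?D = 0" if k: "1 \<le> k" "k < n" for k
    proof (cases "w k < w (Suc k)")
      case True
      have "divdiff k ?S = 0" by (rule divdiff_of_sym[OF schubert_asc_sym[OF wp k True]])
      moreover have "divdiff k (Q n ?c) = 0"
        by (rule divdiff_of_sym[OF Q_sym[of k "code n w", OF k(1) avoid_asc_code[OF a k True]]])
      ultimately show ?thesis by (simp add: divdiff_diff)
    next
      case False
      have "w k \<noteq> w (Suc k)" using perm_inj[OF wp] by fastforce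
      with False have d: "w (Suc k) < w k" by simp
      have l: "perm_length n (w \<circ> tr k) < perm_length n w" using len_down[OF k d] by simp
      have vp: "w \<circ> tr k permutes {1..n}" by (rule permutes_tr[OF wp k])
      have va: "avoid n (w \<circ> tr k)" by (rule avoid_down[OF wp a k d])
      have ih: "schubert n (w \<circ> tr k) = Q n (code n (w \<circ> tr k))"
        by (rule less.hyps[OF l vp va])
      have c0: "code n w (Suc k) = 0" by (rule avoid_desc_code[OF a k d])
      have cc: "code n (w \<circ> tr k) = (\<lambda>i. if i = k then 0 else if i = Suc k then code n w k - 1 else code n w i)"
        by (rule ext) (simp add: code_swap[OF k d] c0)
      have ck: "code n w k \<ge> 1" by (rule code_desc_pos[OF k d])
      have c2: "code n w k = 1" if "Suc k = n"
      proof -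
        have "code n (w \<circ> tr k) (Suc k) = 0" using that by (simp add: code_ge_n)
        hence "code n w k - 1 = 0" using code_swap[OF k d, of "Suc k"] by simp
        with ck show ?thesis by simp
      qed
      have "divdiff k ?S = schubert n (w \<circ> tr k)" by (rule schubert_desc[OF wp k d])
      also have "\<dots> = divdiff k (Q n ?c)"
        unfolding ih cc by (rule Q_desc[OF k ck c0 c2, symmetric])
      finally show ?thesis by (simp add: divdiff_diff)
    qed
    have sym: "swap_poly k ?D = ?D" if "1 \<le> k" "k < n" for k
      by (rule sym_of_divdiff_zero[OF dk[OF that]])
    have kk: "ks m \<subseteq> {1..<n}" if "m \<in> ks ?D" for m
    proof -
      have "m \<in> ks ?S \<union> ks (Q n ?c)" using keys_diff[of ?S "Q n ?c"] that by (rule subsetD)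
      thus ?thesis
      proof (rule UnE)
        assume "m \<in> ks ?S"
        hence "stair n m" using schubert_inv'[OF wp] by simp
        thus ?thesis by (rule stair_keys)
      next
        assume "m \<in> ks (Q n ?c)"
        thus ?thesis by (rule keys_Q)
      qed
    qed
    have k0: "ks ?D \<subseteq> {0}" by (rule sym_const[OF n sym kk])
    obtain k where k: "1 \<le> k" "k < n" "w (Suc k) < w k" using exists_descent[OF wp False] by blast
    have "perm_length n w \<noteq> 0" using len_down[OF k] by simp
    hence "lk ?S 0 = 0" by (rule schubert_const[OF wp])
    moreover have "lk (Q n ?c) 0 = 0"
      by (rule Q_const[of k]) (use k code_desc_pos[OF k] in auto)
    ultimately have "lk ?D 0 = 0" by (simp add: lookup_minus)
    hence "?D = 0" using k0
      by (intro poly_mapping_eqI) (metis in_keys_iff lookup_zero singletonD subsetD)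
    thus ?thesis by simp
  qed
qed


section \<open>The pure x_1 power coefficient\<close>

lemma ev_not_in:
  assumes "\<And>m. m \<in> ks f \<Longrightarrow> k \<notin> ks m"
  shows "ev k f = lk f 0"
proof -
  have "monval (\<lambda>j. if j = k then 1 else 0) m = monval (\<lambda>_. 0) m" if "m \<in> ks f" for m
    unfolding monval_def by (rule prod.cong[OF refl]) (use assms[OF that] in auto)
  hence "ev k f = evalp (\<lambda>_. 0) f" unfolding evalp_def by (intro sum.cong) auto
  thus ?thesis by (simp add: evalp_const)
qed

lemma tele_sum: "j \<le> n \<Longrightarrow> (g :: nat \<Rightarrow> int) j = (\<Sum>k\<in>{j..<n}. g k - g (Suc k)) + g n"
proof (induction n)
  case 0 then show ?case by simp
next
  case (Suc n)
  show ?case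
  proof (cases "j = Suc n")
    case True then show ?thesis by simp
  next
    case False
    hence "j \<le> n" using Suc.prems by simp
    with Suc.IH show ?thesis by (simp add: sum.op_ivl_Suc)
  qed
qed

lemma sum_indicator: "finite A \<Longrightarrow> (\<Sum>k\<in>A. if P k then 1 else (0::int)) = int (card {k\<in>A. P k})"
proof -
  assume fin: "finite A"
  have "(\<Sum>k\<in>A. if P k then 1 else (0::int)) = (\<Sum>k\<in>{k\<in>A. P k}. 1)"
    by (rule sum.mono_neutral_cong_right) (use fin in auto)
  thus ?thesis by simp
qed

lemma card_desc_set:
  assumes wp: "w permutes {1..n}" and ne: "w \<noteq> id" and j: "1 \<le> j" "j \<le> n"
  shows "card {k\<in>{j..<n}. w (Suc k) < w k \<and> avoid n (w \<circ> tr k) \<and> fixes1 k (w \<circ> tr k)} =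
         (if avoid n w \<and> fixes1 j w then 1 else 0)"
proof (cases "avoid n w \<and> fixes1 j w")
  case True
  hence a: "avoid n w" and fj: "fixes1 j w" by auto
  have "\<exists>x. w x \<noteq> x" using ne by (metis eq_id_iff)
  then obtain x where x: "w x \<noteq> x" by blast
  have x1: "1 \<le> x" using x permutes_not_in[OF wp] by fastforce
  define k0 where "k0 = (LEAST x. 1 \<le> x \<and> w x \<noteq> x)"
  have k0: "1 \<le> k0" "w k0 \<noteq> k0" using LeastI[of "\<lambda>x. 1 \<le> x \<and> w x \<noteq> x" x] x x1
    unfolding k0_def by auto
  have fk0: "fixes1 k0 w" unfolding fixes1_def
  proof (intro allI impI)
    fix i assume "1 \<le> i \<and> i < k0"
    thus "w i = i" using not_less_Least[of i "\<lambda>x. 1 \<le> x \<and> w x \<noteq> x"] unfolding k0_def by blast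
  qed
  have k0n: "k0 \<in> {1..n}" using k0 permutes_not_in[OF wp] by fastforce
  have jk0: "j \<le> k0"
  proof (rule ccontr)
    assume "\<not> j \<le> k0"
    hence "w k0 = k0" using fj k0(1) unfolding fixes1_def by auto
    with k0(2) show False by simp
  qed
  have ge: "k0 \<le> w k0" by (rule fixes_below[OF wp fk0 _ k0n]) simp
  hence gt: "k0 < w k0" using k0(2) by simp
  obtain y where y: "y \<in> {1..n}" "w y = k0"
    using k0n permutes_image[OF wp] by (metis imageE)
  have yk: "k0 < y"
  proof (rule ccontr)
    assume "\<not> k0 < y"
    moreover have "y \<noteq> k0" using y k0(2) by auto
    ultimately have "y < k0" by simp
    hence "w y = y" using fk0 y(1) unfolding fixes1_def by auto
    with y(2) \<open>y < k0\<close> show False by simp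
  qed
  have k0lt: "k0 < n" using yk y(1) by simp
  have desc: "w (Suc k0) < w k0"
  proof (rule ccontr)
    assume "\<not> w (Suc k0) < w k0"
    moreover have "w k0 \<noteq> w (Suc k0)" using perm_inj[OF wp] by fastforce
    ultimately have "w k0 < w (Suc k0)" by simp
    hence "code n w k0 = 0" by (rule avoid_asc_code[OF a k0(1) k0lt])
    hence "\<not> w y < w k0" using yk y(1) unfolding code_zero_iff by auto
    with y(2) gt show False by simp
  qed
  have "{k\<in>{j..<n}. w (Suc k) < w k \<and> avoid n (w \<circ> tr k) \<and> fixes1 k (w \<circ> tr k)} = {k0}"
  proof (rule set_eqI, rule iffI)
    fix k assume "k \<in> {k\<in>{j..<n}. w (Suc k) < w k \<and> avoid n (w \<circ> tr k) \<and> fixes1 k (w \<circ> tr k)}"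
    hence kk: "j \<le> k" "k < n" "w (Suc k) < w k" "fixes1 k (w \<circ> tr k)" by auto
    consider "k < k0" | "k = k0" | "k0 < k" by linarith
    thus "k \<in> {k0}"
    proof cases
      case 1
      have wk: "w k = k" using fk0 1 kk(1) j(1) unfolding fixes1_def by auto
      show ?thesis
      proof (cases "Suc k < k0")
        case True
        hence "w (Suc k) = Suc k" using fk0 unfolding fixes1_def by auto
        with wk kk(3) show ?thesis by simp
      next
        case False
        hence "Suc k = k0" using 1 by simp
        with wk kk(3) gt show ?thesis by simp
      qed
    next
      case 2 thus ?thesis by simp
    next
      case 3
      have "(w \<circ> tr k) k0 = k0" using kk(4) 3 k0(1) unfolding fixes1_def by blast
      moreover have "tr k k0 = k0" using 3 by (simp add: transpose_def)
      ultimately have "w k0 = k0" by simp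
      with k0(2) show ?thesis by simp
    qed
  next
    fix k assume "k \<in> {k0}"
    hence kk: "k = k0" by simp
    have "avoid n (w \<circ> tr k0)" by (rule avoid_down[OF wp a k0(1) k0lt desc])
    moreover have "fixes1 k0 (w \<circ> tr k0)"
      using fk0 unfolding fixes1_def by (auto simp: transpose_def)
    ultimately show "k \<in> {k\<in>{j..<n}. w (Suc k) < w k \<and> avoid n (w \<circ> tr k) \<and> fixes1 k (w \<circ> tr k)}"
      using kk jk0 k0lt desc by simp
  qed
  thus ?thesis using True by simp
next
  case False
  have "{k\<in>{j..<n}. w (Suc k) < w k \<and> avoid n (w \<circ> tr k) \<and> fixes1 k (w \<circ> tr k)} = {}"
  proof (rule ccontr)
    assume "{k\<in>{j..<n}. w (Suc k) < w k \<and> avoid n (w \<circ> tr k) \<and> fixes1 k (w \<circ> tr k)} \<noteq> {}"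
    then obtain k where kk: "j \<le> k" "k < n" "w (Suc k) < w k" "avoid n (w \<circ> tr k)" "fixes1 k (w \<circ> tr k)"
      by auto
    have "avoid n w" by (rule avoid_up[OF wp _ kk(2) kk(3) kk(4) kk(5)]) (use j kk in simp)
    moreover have "fixes1 j w" unfolding fixes1_def
    proof (intro allI impI)
      fix i assume i: "1 \<le> i \<and> i < j"
      hence "(w \<circ> tr k) i = i" using kk(5) kk(1) unfolding fixes1_def by auto
      moreover have "tr k i = i" using i kk(1) by (simp add: transpose_def)
      ultimately show "w i = i" by simp
    qed
    ultimately show False using False by simp
  qed
  note e = this
  show ?thesis unfolding e using False by (simp only: card.empty if_False)
qed

theorem ev_schubert:
  assumes n: "1 \<le> n"
  shows "w permutes {1..n} \<Longrightarrow> 1 \<le> j \<Longrightarrow> j \<le> n \<Longrightarrow>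
    ev j (schubert n w) = (if avoid n w \<and> fixes1 j w then 1 else 0)"
proof (induction "perm_length n w" arbitrary: w j rule: less_induct)
  case less
  note wp = less.prems(1) and j = less.prems(2,3)
  show ?case
  proof (cases "w = id")
    case True
    have "avoid n id" unfolding avoid_def by auto
    moreover have "fixes1 j id" unfolding fixes1_def by auto
    ultimately show ?thesis using True schubert_id[OF n] by simp
  next
    case False
    let ?S = "schubert n w"
    let ?P = "\<lambda>k. w (Suc k) < w k \<and> avoid n (w \<circ> tr k) \<and> fixes1 k (w \<circ> tr k)"
    have T: "ev j ?S = (\<Sum>k\<in>{j..<n}. ev k ?S - ev (Suc k) ?S) + ev n ?S"
      by (rule tele_sum[OF j(2)])
    obtain k where k: "1 \<le> k" "k < n" "w (Suc k) < w k" using exists_descent[OF wp False] by blast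
    have "perm_length n w \<noteq> 0" using len_down[OF k] by simp
    hence c0: "lk ?S 0 = 0" by (rule schubert_const[OF wp])
    have "ev n ?S = lk ?S 0"
    proof (rule ev_not_in)
      fix m assume "m \<in> ks ?S"
      hence "stair n m" using schubert_inv'[OF wp] by simp
      thus "n \<notin> ks m" using stair_keys by fastforce
    qed
    hence en: "ev n ?S = 0" using c0 by simp
    have terms: "ev k ?S - ev (Suc k) ?S = (if ?P k then 1 else 0)" if kj: "k \<in> {j..<n}" for k
    proof -
      have k1: "1 \<le> k" "k < n" using kj j by auto
      have "ev k ?S - ev (Suc k) ?S = ev k (divdiff k ?S)" by (simp add: ev_divdiff)
      also have "\<dots> = (if ?P k then 1 else 0)"
      proof (cases "w k < w (Suc k)")
        case True
        have "divdiff k ?S = 0" by (rule divdiff_of_sym[OF schubert_asc_sym[OF wp k1 True]])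
        thus ?thesis using True by simp
      next
        case False
        have "w k \<noteq> w (Suc k)" using perm_inj[OF wp] by fastforce
        with False have d: "w (Suc k) < w k" by simp
        have l: "perm_length n (w \<circ> tr k) < perm_length n w" using len_down[OF k1 d] by simp
        have vp: "w \<circ> tr k permutes {1..n}" by (rule permutes_tr[OF wp k1])
        have "divdiff k ?S = schubert n (w \<circ> tr k)" by (rule schubert_desc[OF wp k1 d])
        hence "ev k (divdiff k ?S) = (if avoid n (w \<circ> tr k) \<and> fixes1 k (w \<circ> tr k) then 1 else 0)"
          using less.hyps[OF l vp k1(1)] k1 by simp
        thus ?thesis using d by simp
      qed
      finally show ?thesis .
    qed
    have "ev j ?S = (\<Sum>k\<in>{j..<n}. if ?P k then 1 else 0)"
      using T en terms by simp
    also have "\<dots> = int (card {k\<in>{j..<n}. ?P k})" by (rule sum_indicator) simp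
    also have "\<dots> = (if avoid n w \<and> fixes1 j w then 1 else 0)"
      using card_desc_set[OF wp False j] by simp
    finally show ?thesis .
  qed
qed

lemma ev1_chm: "ev 1 (chm a) = 1"
  unfolding chm_def evalp_prod by (rule prod.neutral) (intro ballI ev1_hcomp, simp)

theorem theorem3:
  fixes n :: nat and w :: "nat \<Rightarrow> nat"
  assumes "n \<ge> 1" and "w permutes {1..n}"
  shows "(\<exists>a. schubert n w = chm a) \<longleftrightarrow>
         (\<not> contains_pattern n w [3,2,1] \<and> \<not> contains_pattern n w [2,3,1])"
  unfolding pattern_iff[OF assms(2)]
proof
  assume "\<exists>a. schubert n w = chm a"
  then obtain a where a: "schubert n w = chm a" by blast
  have "ev 1 (schubert n w) = 1" unfolding a by (rule ev1_chm)
  moreover have "ev 1 (schubert n w) = (if avoid n w \<and> fixes1 1 w then 1 else 0)"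
    by (rule ev_schubert[OF assms(1) assms(2)]) (use assms(1) in auto)
  ultimately show "avoid n w" by (simp split: if_splits)
next
  assume "avoid n w"
  hence "schubert n w = chm (map (code n w) [1..<n])"
    using avoid_schubert[OF assms(1,2)] chm_Q by simp
  thus "\<exists>a. schubert n w = chm a" by blast
qed


end
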